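(* Let $G=(V,E)$ be a connected input network and let $d\geq 1$ be an integer. There is a distributed algorithm running in $O(2^{2d})$ rounds in the CONGEST model that outputs either an elimination tree $T=(V,F)$ of $G$ of depth at most $2^d$, or reports that $\mathsf{td}(G)>d$. In the former case, at the end of the algorithm each node $u\in V$ knows its parent and its children in $T$, as well as the depth of $T$.
   Context: CONGEST model: synchronous rounds on a connected $n$-node network with unique $O(\log n)$-bit identifiers; in each round each node exchanges $O(\log n)$-bit messages with each neighbor and computes locally. An elimination tree of $G$ is a rooted tree on $V$ such that for every edge $\{u,v\}\in E$ one endpoint is an ancestor of the other; its depth is the number of vertices on a longest root-to-leaf path. $\mathsf{td}(G)$ (treedepth) is the minimum depth of an elimination forest of $G$. *)

theory Defs
  imports Main "HOL-Library.Discrete_Functions"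
begin

definition connected_graph :: "nat set \<Rightarrow> (nat \<Rightarrow> nat \<Rightarrow> bool) \<Rightarrow> bool" where
  "connected_graph V E \<longleftrightarrow> finite V \<and> V \<noteq> {} \<and>
     (\<forall>u v. E u v \<longrightarrow> u \<in> V \<and> v \<in> V \<and> E v u \<and> u \<noteq> v) \<and>
     (\<forall>u\<in>V. \<forall>v\<in>V. (u, v) \<in> {(x, y). E x y}\<^sup>*)"

definition parent_rel :: "nat set \<Rightarrow> (nat \<Rightarrow> nat option) \<Rightarrow> (nat \<times> nat) set" where
  "parent_rel V par = {(v, w). v \<in> V \<and> par v = Some w}"

definition ancestor :: "nat set \<Rightarrow> (nat \<Rightarrow> nat option) \<Rightarrow> nat \<Rightarrow> nat \<Rightarrow> bool" where
  "ancestor V par u v \<longleftrightarrow> (v, u) \<in> (parent_rel V par)\<^sup>+"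

text \<open>A rooted forest on V: parents lie in V and every vertex reaches a root
  (a vertex without parent); this excludes cycles.\<close>
definition rooted_forest :: "nat set \<Rightarrow> (nat \<Rightarrow> nat option) \<Rightarrow> bool" where
  "rooted_forest V par \<longleftrightarrow>
     (\<forall>v\<in>V. \<forall>w. par v = Some w \<longrightarrow> w \<in> V) \<and>
     (\<forall>v\<in>V. \<exists>r\<in>V. par r = None \<and> (v, r) \<in> (parent_rel V par)\<^sup>*)"

definition elimination_forest :: "nat set \<Rightarrow> (nat \<Rightarrow> nat \<Rightarrow> bool) \<Rightarrow> (nat \<Rightarrow> nat option) \<Rightarrow> bool" where
  "elimination_forest V E par \<longleftrightarrow> rooted_forest V par \<and>
     (\<forall>u v. E u v \<longrightarrow> ancestor V par u v \<or> ancestor V par v u)"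

definition elimination_tree :: "nat set \<Rightarrow> (nat \<Rightarrow> nat \<Rightarrow> bool) \<Rightarrow> (nat \<Rightarrow> nat option) \<Rightarrow> bool" where
  "elimination_tree V E par \<longleftrightarrow> elimination_forest V E par \<and>
     (\<exists>!r. r \<in> V \<and> par r = None)"

text \<open>Depth = number of vertices on a longest root-to-leaf path
  = max over v of the number of vertices on the path from v to its root.\<close>
definition forest_depth :: "nat set \<Rightarrow> (nat \<Rightarrow> nat option) \<Rightarrow> nat" where
  "forest_depth V par = Max ((\<lambda>v. card {w. (v, w) \<in> (parent_rel V par)\<^sup>*}) ` V)"

definition treedepth :: "nat set \<Rightarrow> (nat \<Rightarrow> nat \<Rightarrow> bool) \<Rightarrow> nat" where
  "treedepth V E = (LEAST k. \<exists>par. elimination_forest V E par \<and> forest_depth V par = k)"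

text \<open>An algorithm is given by: init (own id, set of neighbour ids) giving the
 initial local state; send (state, neighbour id) giving the bit string sent to
 that neighbour in the current round; step (state, received messages indexed by
 sender id) giving the next state. Local computation is unrestricted.\<close>

primrec run :: "(nat \<Rightarrow> nat set \<Rightarrow> 's) \<Rightarrow> ('s \<Rightarrow> nat \<Rightarrow> bool list) \<Rightarrow>
    ('s \<Rightarrow> (nat \<Rightarrow> bool list) \<Rightarrow> 's) \<Rightarrow> (nat \<Rightarrow> nat \<Rightarrow> bool) \<Rightarrow> nat \<Rightarrow> nat \<Rightarrow> 's" where
  "run init send step E 0 v = init v {u. E v u}"
| "run init send step E (Suc r) v =
     step (run init send step E r v)
           (\<lambda>u. if E u v then send (run init send step E r u) v else [])"

text \<open>Output of a node: either a report that td(G) > d, or its parent (None for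
 the root), its set of children, and the depth of T.\<close>
datatype td_output = Reject | TreeInfo "nat option" "nat set" nat

text \<open>Bandwidth: O(log n) bits, i.e. at most B * (floor(log2 n)+1) bits.\<close>
definition log_bits :: "nat \<Rightarrow> nat" where
  "log_bits n = floor_log (max 2 n) + 1"

end

theory Submission
  imports Defs "HOL-Library.Transitive_Closure_Table" "HOL-Library.Countable" "HOL-Library.Option_ord"
begin


definition epath :: "(nat \<Rightarrow> nat \<Rightarrow> bool) \<Rightarrow> nat list \<Rightarrow> bool" where
  "epath E ps \<longleftrightarrow> (\<forall>i. Suc i < length ps \<longrightarrow> E (ps!i) (ps!Suc i))"

lemma epath_take: "epath E ps \<Longrightarrow> epath E (take k ps)"
  by (auto simp: epath_def)

lemma epath_drop: "epath E ps \<Longrightarrow> epath E (drop k ps)"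
  unfolding epath_def
proof (intro allI impI)
  fix i assume a: "\<forall>i. Suc i < length ps \<longrightarrow> E (ps ! i) (ps ! Suc i)" and b: "Suc i < length (drop k ps)"
  then have "Suc (k + i) < length ps" by auto
  then show "E (drop k ps ! i) (drop k ps ! Suc i)" using a b by auto
qed

lemma epath_Cons: "epath E (a # b # ps) \<longleftrightarrow> E a b \<and> epath E (b # ps)"
  unfolding epath_def
  by (auto simp: nth_Cons split: nat.splits)

abbreviation PR where "PR V par \<equiv> parent_rel V par"

lemma sv_pr: "single_valued (parent_rel V par)"
  by (auto simp: single_valued_def parent_rel_def)

lemma top_exists:
  assumes EF: "elimination_forest V E par"
  shows "epath E ps \<Longrightarrow> ps \<noteq> [] \<Longrightarrow> \<exists>z\<in>set ps. \<forall>y\<in>set ps. (y,z) \<in> (PR V par)\<^sup>*"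
proof (induction ps)
  case Nil then show ?case by simp
next
  case (Cons a qs)
  show ?case
  proof (cases qs)
    case Nil then show ?thesis by auto
  next
    case (Cons h qs')
    with Cons.prems have Eah: "E a h" and ep: "epath E qs" by (auto simp: epath_Cons)
    from Cons.IH[OF ep] Cons obtain z where z: "z \<in> set qs" "\<forall>y\<in>set qs. (y,z) \<in> (PR V par)\<^sup>*" by auto
    have hz: "(h,z) \<in> (PR V par)\<^sup>*" using z Cons by auto
    from EF Eah have "ancestor V par a h \<or> ancestor V par h a" by (auto simp: elimination_forest_def)
    then show ?thesis
    proof
      assume "ancestor V par h a"
      then have "(a,h) \<in> (PR V par)\<^sup>*" by (auto simp: ancestor_def)
      then have "(a,z) \<in> (PR V par)\<^sup>*" using hz by auto
      then show ?thesis using z by auto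
    next
      assume "ancestor V par a h"
      then have ha: "(h,a) \<in> (PR V par)\<^sup>*" by (auto simp: ancestor_def)
      from single_valued_confluent[OF sv_pr ha hz]
      show ?thesis
      proof
        assume "(a,z) \<in> (PR V par)\<^sup>*" then show ?thesis using z by auto
      next
        assume za: "(z,a) \<in> (PR V par)\<^sup>*"
        have "\<forall>y\<in>set (a#qs). (y,a) \<in> (PR V par)\<^sup>*"
          using z za by (auto intro: rtrancl_trans)
        then show ?thesis by auto
      qed
    qed
  qed
qed

lemma anc_subset:
  assumes "rooted_forest V par"
  shows "(y,w) \<in> (PR V par)\<^sup>* \<Longrightarrow> w \<in> insert y V"
proof (induction rule: rtrancl_induct)
  case base then show ?case by simp
next
  case (step a b)
  then show ?case using assms by (auto simp: parent_rel_def rooted_forest_def)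
qed

lemma anc_finite:
  assumes "rooted_forest V par" "finite V"
  shows "finite {w. (y,w) \<in> (PR V par)\<^sup>*}"
  using anc_subset[OF assms(1)] assms(2) by (metis (no_types, lifting) finite_insert mem_Collect_eq rev_finite_subset subsetI)

lemma path_depth:
  assumes EF: "elimination_forest V E par"
  shows "epath E ps \<Longrightarrow> distinct ps \<Longrightarrow> 2^j \<le> length ps \<Longrightarrow>
    \<exists>y\<in>set ps. j+1 \<le> card ({w. (y,w) \<in> (PR V par)\<^sup>*} \<inter> set ps)"
proof (induction j arbitrary: ps)
  case 0
  then obtain y where y: "y \<in> set ps" by (cases ps) auto
  then have "y \<in> {w. (y,w) \<in> (PR V par)\<^sup>*} \<inter> set ps" by auto
  then have "card ({w. (y,w) \<in> (PR V par)\<^sup>*} \<inter> set ps) \<ge> 1"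
    by (metis One_nat_def card_0_eq empty_iff finite_Int finite_set less_one not_le)
  then show ?case using y by auto
next
  case (Suc j)
  have ne: "ps \<noteq> []" using Suc.prems by auto
  from top_exists[OF EF Suc.prems(1) ne] obtain z where z: "z \<in> set ps" "\<forall>y\<in>set ps. (y,z) \<in> (PR V par)\<^sup>*" by auto
  obtain i where i: "i < length ps" "ps ! i = z" using z by (auto simp: in_set_conv_nth)
  define L where "L = take i ps"
  define R where "R = drop (Suc i) ps"
  have dec: "ps = L @ z # R" unfolding L_def R_def using i id_take_nth_drop by metis
  have gen: "\<exists>y\<in>set ps. Suc j + 1 \<le> card ({w. (y,w) \<in> (PR V par)\<^sup>*} \<inter> set ps)"
    if S: "epath E S" "distinct S" "set S \<subseteq> set ps" "z \<notin> set S" "2^j \<le> length S" for S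
  proof -
    from Suc.IH[OF S(1,2,5)] obtain y where y: "y \<in> set S" "j+1 \<le> card ({w. (y,w) \<in> (PR V par)\<^sup>*} \<inter> set S)" by auto
    have yz: "(y,z) \<in> (PR V par)\<^sup>*" using z y S by auto
    have sub: "insert z ({w. (y,w) \<in> (PR V par)\<^sup>*} \<inter> set S) \<subseteq> {w. (y,w) \<in> (PR V par)\<^sup>*} \<inter> set ps"
      using yz z S by auto
    have "card (insert z ({w. (y,w) \<in> (PR V par)\<^sup>*} \<inter> set S)) = Suc (card ({w. (y,w) \<in> (PR V par)\<^sup>*} \<inter> set S))"
      using S(4) by (simp)
    moreover have "card (insert z ({w. (y,w) \<in> (PR V par)\<^sup>*} \<inter> set S)) \<le> card ({w. (y,w) \<in> (PR V par)\<^sup>*} \<inter> set ps)"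
      using sub by (intro card_mono) auto
    ultimately show ?thesis using y S by force
  qed
  have dL: "distinct L" "z \<notin> set L" "distinct R" "z \<notin> set R" using Suc.prems(2) dec by auto
  have eL: "epath E L" unfolding L_def by (rule epath_take[OF Suc.prems(1)])
  have eR: "epath E R" unfolding R_def by (rule epath_drop[OF Suc.prems(1)])
  have "length L + length R + 1 = length ps" using dec by simp
  then have "2^j \<le> length L \<or> 2^j \<le> length R" using Suc.prems(3) by auto
  then show ?case
  proof
    assume "2^j \<le> length L" then show ?thesis using gen[OF eL dL(1) _ dL(2)] dec by auto
  next
    assume "2^j \<le> length R" then show ?thesis using gen[OF eR dL(3) _ dL(4)] dec by auto
  qed
qed

lemma path_bound:
  assumes EF: "elimination_forest V E par" and fin: "finite V"
    and p: "epath E ps" "distinct ps" "set ps \<subseteq> V" and dep: "forest_depth V par \<le> d"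
  shows "length ps < 2^d"
proof (rule ccontr)
  assume "\<not> length ps < 2^d"
  then have "2^d \<le> length ps" by simp
  from path_depth[OF EF p(1,2) this] obtain y where y: "y \<in> set ps"
    "d+1 \<le> card ({w. (y,w) \<in> (PR V par)\<^sup>*} \<inter> set ps)" by auto
  have RF: "rooted_forest V par" using EF by (simp add: elimination_forest_def)
  have "card ({w. (y,w) \<in> (PR V par)\<^sup>*} \<inter> set ps) \<le> card {w. (y,w) \<in> (PR V par)\<^sup>*}"
    by (intro card_mono anc_finite[OF RF fin]) auto
  also have "\<dots> \<le> forest_depth V par" unfolding forest_depth_def
    using y p(3) fin by (intro Max_ge) auto
  finally show False using y dep by simp
qed


lemma lin_forest:
  assumes fin: "finite V" and ne: "V \<noteq> {}"
    and Ein: "\<forall>u v. E u v \<longrightarrow> u \<in> V \<and> v \<in> V \<and> u \<noteq> v"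
  shows "\<exists>par. elimination_forest V E par"
proof -
  define par where "par v = (if v = Min V then None else Some (Max {u\<in>V. u < v}))" for v
  have anc: "(v,u) \<in> (PR V par)\<^sup>+" if "u \<in> V" "v \<in> V" "u < v" for u v
    using that
  proof (induction v rule: less_induct)
    case (less v)
    have vm: "v \<noteq> Min V" using less.prems fin by (metis Min_le leD)
    let ?S = "{u\<in>V. u < v}"
    have Sf: "finite ?S" "?S \<noteq> {}" using fin less.prems by auto
    define p where "p = Max ?S"
    have p: "p \<in> V" "p < v" "u \<le> p" using Max_in[OF Sf] Max_ge[OF Sf(1)] less.prems unfolding p_def by auto
    have vp: "(v,p) \<in> PR V par" using vm less.prems unfolding parent_rel_def par_def p_def by auto
    show ?case
    proof (cases "u = p")
      case True then show ?thesis using vp by auto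
    next
      case False
      then have "(p,u) \<in> (PR V par)\<^sup>+" using less.IH[OF p(2) less.prems(1) p(1)] p by auto
      then show ?thesis using vp by (meson trancl_into_trancl2)
    qed
  qed
  have "elimination_forest V E par"
    unfolding elimination_forest_def rooted_forest_def
  proof (intro conjI ballI allI impI)
    fix v w assume "v \<in> V" "par v = Some w"
    then show "w \<in> V" unfolding par_def
      by (metis (no_types, lifting) Max_in Min_in fin finite_nat_set_iff_bounded mem_Collect_eq ne option.inject option.simps(3) Collect_empty_eq linorder_neqE_nat Min_le leD)
  next
    fix v assume v: "v \<in> V"
    have m: "Min V \<in> V" "par (Min V) = None" using fin ne by (auto simp: par_def)
    have "(v, Min V) \<in> (PR V par)\<^sup>*"
    proof (cases "v = Min V")
      case False then have "Min V < v" using fin v by (metis Min_le le_neq_implies_less)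
      then show ?thesis using anc[OF m(1) v] by auto
    qed simp
    then show "\<exists>r\<in>V. par r = None \<and> (v, r) \<in> (PR V par)\<^sup>*" using m by auto
  next
    fix u v assume "E u v"
    then have "u \<in> V" "v \<in> V" "u \<noteq> v" using Ein by auto
    then show "ancestor V par u v \<or> ancestor V par v u"
      unfolding ancestor_def using anc by (metis linorder_neqE_nat)
  qed
  then show ?thesis by blast
qed

lemma td_small:
  assumes fin: "finite V" and ne: "V \<noteq> {}"
    and Ein: "\<forall>u v. E u v \<longrightarrow> u \<in> V \<and> v \<in> V \<and> u \<noteq> v"
    and td: "treedepth V E \<le> d"
  shows "\<exists>par. elimination_forest V E par \<and> forest_depth V par \<le> d"
proof -
  obtain p0 where "elimination_forest V E p0" using lin_forest[OF fin ne Ein] by blast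
  then have ex: "\<exists>k par. elimination_forest V E par \<and> forest_depth V par = k" by blast
  from LeastI_ex[OF ex] obtain par where "elimination_forest V E par" "forest_depth V par = treedepth V E"
    unfolding treedepth_def by blast
  then show ?thesis using td by auto
qed


fun tobits :: "nat \<Rightarrow> bool list" where
  "tobits n = (if n = 0 then [] else odd n # tobits (n div 2))"
declare tobits.simps[simp del]

fun frombits :: "bool list \<Rightarrow> nat" where
  "frombits [] = 0"
| "frombits (b # bs) = (if b then 1 else 0) + 2 * frombits bs"

lemma frombits_tobits: "frombits (tobits n) = n"
proof (induction n rule: less_induct)
  case (less n)
  show ?case
  proof (cases "n = 0")
    case True then show ?thesis by (simp add: tobits.simps)
  next
    case False
    then have "frombits (tobits n) = (if odd n then 1 else 0) + 2 * frombits (tobits (n div 2))"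
      by (simp add: tobits.simps)
    also have "frombits (tobits (n div 2)) = n div 2" using less False by simp
    finally show ?thesis by presburger
  qed
qed

lemma tobits_len: "n < 2^k \<Longrightarrow> length (tobits n) \<le> k"
proof (induction k arbitrary: n)
  case 0 then show ?case by (simp add: tobits.simps)
next
  case (Suc k)
  show ?case
  proof (cases "n = 0")
    case True then show ?thesis by (simp add: tobits.simps)
  next
    case False
    have "n div 2 < 2^k" using Suc.prems by auto
    then show ?thesis using Suc.IH False by (simp add: tobits.simps)
  qed
qed

fun encopt :: "nat option \<Rightarrow> bool list" where
  "encopt None = [False]"
| "encopt (Some x) = True # tobits x"

fun decopt :: "bool list \<Rightarrow> nat option" where
  "decopt [] = None"
| "decopt (b # bs) = (if b then Some (frombits bs) else None)"

lemma decopt_encopt[simp]: "decopt (encopt oo) = oo"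
  by (cases oo) (auto simp: frombits_tobits)

lemma log_bits_bound:
  assumes "x < (max 2 n) ^ c"
  shows "x < 2 ^ (c * log_bits n)"
proof -
  have "max 2 n < 2 ^ log_bits n" unfolding log_bits_def
    using floor_log_exp2_gt[of "max 2 n"] by simp
  then have "(max 2 n) ^ c \<le> (2 ^ log_bits n) ^ c" by (intro power_mono) auto
  also have "\<dots> = 2 ^ (c * log_bits n)" by (simp add: power_mult[symmetric] mult.commute)
  finally show ?thesis using assms by simp
qed

lemma log_bits_pos: "1 \<le> log_bits n" by (simp add: log_bits_def)

lemma encopt_len:
  assumes "\<forall>x. oo = Some x \<longrightarrow> x < (max 2 n) ^ c"
  shows "length (encopt oo) \<le> (c+1) * log_bits n"
proof (cases oo)
  case None then show ?thesis using log_bits_pos[of n] by simp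
next
  case (Some x)
  then have "length (tobits x) \<le> c * log_bits n" using assms log_bits_bound tobits_len by blast
  then show ?thesis using Some log_bits_pos[of n] by simp
qed

record st =
  me :: nat
  nb :: "nat list"
  tm :: nat
  rj :: bool
  pl :: bool
  lv :: nat
  pa :: "nat option"
  lb :: "nat option"
  cu :: "nat option"
  kd :: "nat list"
  dp :: nat
  bt :: bool

definition enc :: "st \<Rightarrow> nat list" where
  "enc s = [to_nat (me s, nb s, tm s, rj s, pl s, lv s, pa s, lb s, cu s, kd s, dp s, bt s)]"

definition dec :: "nat list \<Rightarrow> st" where
  "dec l = (case from_nat (hd l) :: nat \<times> nat list \<times> nat \<times> bool \<times> bool \<times> nat \<times> nat option \<times> nat option \<times> nat option \<times> nat list \<times> nat \<times> bool of
     (a1, a2, a3, a4, a5, a6, a7, a8, a9, a10, a11, a12) \<Rightarrow>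
       \<lparr>me = a1, nb = a2, tm = a3, rj = a4, pl = a5, lv = a6, pa = a7, lb = a8, cu = a9, kd = a10, dp = a11, bt = a12\<rparr>)"

lemma dec_enc[simp]: "dec (enc s) = s"
  by (cases s) (simp add: enc_def dec_def)

definition cand :: "st \<Rightarrow> nat option" where
  "cand s = (if pl s then None else case lb s of None \<Rightarrow> Some (me s)
      | Some a \<Rightarrow> if a \<in> set (nb s) then Some (me s) else None)"

definition eff :: "nat \<Rightarrow> st \<Rightarrow> nat option" where
  "eff N s = (if pl s then None else if tm s mod Suc N = 0 then cand s else cu s)"

definition T0 :: "nat \<Rightarrow> nat" where "T0 N = N * Suc N"

definition effB :: "nat \<Rightarrow> st \<Rightarrow> bool" where
  "effB N s = (let i = tm s - Suc (T0 N) in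
     if i mod (2*N) = 0 then Suc (i div (2*N)) \<le> lv s else bt s)"

definition alg_init :: "nat \<Rightarrow> nat set \<Rightarrow> st" where
  "alg_init v S = \<lparr>me = v, nb = sorted_list_of_set S, tm = 0, rj = False, pl = False, lv = 0,
     pa = None, lb = None, cu = None, kd = [], dp = 0, bt = False\<rparr>"

definition alg_send :: "nat \<Rightarrow> st \<Rightarrow> nat \<Rightarrow> bool list" where
  "alg_send N s u = (if tm s < T0 N then encopt (eff N s)
     else if tm s = T0 N then encopt (if pl s then pa s else None)
     else if tm s \<le> T0 N + N * (2*N) then [effB N s] else [])"

definition alg_step :: "nat \<Rightarrow> st \<Rightarrow> (nat \<Rightarrow> bool list) \<Rightarrow> st" where
  "alg_step N s m = (let r = tm s; s' = s\<lparr>tm := Suc r\<rparr> in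
     if r < T0 N then
       (if pl s then s'
        else if r mod Suc N < N then
          s'\<lparr>cu := Max (insert (eff N s) ((\<lambda>u. decopt (m u)) ` set (nb s)))\<rparr>
        else
          (let bad = (cu s = None \<or> (\<exists>u\<in>set (nb s). decopt (m u) \<noteq> None \<and> decopt (m u) \<noteq> cu s)) in
           if cu s = Some (me s) then s'\<lparr>rj := (rj s \<or> bad), pl := True, lv := Suc (r div Suc N), pa := lb s\<rparr>
           else s'\<lparr>rj := (rj s \<or> bad), lb := cu s\<rparr>))
     else if r = T0 N then
       s'\<lparr>rj := (rj s \<or> \<not> pl s), kd := filter (\<lambda>u. decopt (m u) = Some (me s)) (nb s)\<rparr>
     else if r \<le> T0 N + N * (2*N) then
       (let i = r - Suc (T0 N); b = (effB N s \<or> (\<exists>u\<in>set (nb s). m u = [True])) in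
        if Suc (i mod (2*N)) = 2*N then s'\<lparr>bt := b, dp := (if b then Suc (i div (2*N)) else dp s)\<rparr>
        else s'\<lparr>bt := b\<rparr>)
     else s')"

definition alg_out :: "st \<Rightarrow> td_output" where
  "alg_out s = (if rj s then Reject else TreeInfo (pa s) (set (kd s)) (dp s))"

lemma step_basic[simp]:
  "me (alg_step N s m) = me s" "nb (alg_step N s m) = nb s" "tm (alg_step N s m) = Suc (tm s)"
  by (auto simp: alg_step_def Let_def)

lemma rj_mono: "rj s \<Longrightarrow> rj (alg_step N s m)"
  by (auto simp: alg_step_def Let_def)

lemma run_enc:
  "run (\<lambda>v S. enc (alg_init v S)) (\<lambda>s u. alg_send N (dec s) u) (\<lambda>s m. enc (alg_step N (dec s) m)) E r v
   = enc (run alg_init (alg_send N) (alg_step N) E r v)"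
proof (induction r arbitrary: v)
  case (Suc r)
  show ?case by (simp only: run.simps Suc.IH dec_enc)
qed simp


declare run.simps(2)[simp del]

locale alg =
  fixes V :: "nat set" and E :: "nat \<Rightarrow> nat \<Rightarrow> bool" and N :: nat
  assumes conn: "connected_graph V E" and N2: "2 \<le> N"
begin

abbreviation S where "S \<equiv> run alg_init (alg_send N) (alg_step N) E"

definition msgs where "msgs r v = (\<lambda>u. if E u v then alg_send N (S r u) v else [])"

lemma finV: "finite V" and neV: "V \<noteq> {}" using conn by (auto simp: connected_graph_def)

lemma Ein: "E u v \<Longrightarrow> u \<in> V \<and> v \<in> V \<and> E v u \<and> u \<noteq> v"
  using conn by (auto simp: connected_graph_def)

lemma nbr_fin: "finite {u. E v u}"
  using finV Ein by (metis (no_types, lifting) mem_Collect_eq rev_finite_subset subsetI)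

lemma S_Suc: "S (Suc r) v = alg_step N (S r v) (msgs r v)"
  by (simp add: msgs_def run.simps(2))

lemma S_basic[simp]: "me (S r v) = v \<and> tm (S r v) = r"
  by (induction r) (simp add: alg_init_def, simp add: S_Suc)

lemma S_nb: "nb (S r v) = sorted_list_of_set {u. E v u}"
  by (induction r) (simp add: alg_init_def, simp add: S_Suc)

lemma nb_set[simp]: "set (nb (S r v)) = {u. E v u}"
  using nbr_fin by (simp add: S_nb)

lemma msg_nb: "E v u \<Longrightarrow> msgs r v u = alg_send N (S r u) v"
  using Ein by (auto simp: msgs_def)

lemma P1: "r < T0 N \<Longrightarrow> pl (S r v) \<Longrightarrow> S (Suc r) v = (S r v)\<lparr>tm := Suc r\<rparr>"
  by (simp add: S_Suc alg_step_def)

lemma P2: "r < T0 N \<Longrightarrow> \<not> pl (S r v) \<Longrightarrow> r mod Suc N < N \<Longrightarrow>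
  S (Suc r) v = (S r v)\<lparr>tm := Suc r, cu := Max (insert (eff N (S r v)) ((\<lambda>u. eff N (S r u)) ` {u. E v u}))\<rparr>"
proof -
  assume a: "r < T0 N" "\<not> pl (S r v)" "r mod Suc N < N"
  have "(\<lambda>u. decopt (msgs r v u)) ` {u. E v u} = (\<lambda>u. eff N (S r u)) ` {u. E v u}"
    using a by (auto simp: msg_nb alg_send_def)
  then show ?thesis using a by (simp add: S_Suc alg_step_def Let_def)
qed

lemma P3: "r < T0 N \<Longrightarrow> \<not> pl (S r v) \<Longrightarrow> r mod Suc N = N \<Longrightarrow>
  S (Suc r) v = (let bad = (cu (S r v) = None \<or> (\<exists>u. E v u \<and> eff N (S r u) \<noteq> None \<and> eff N (S r u) \<noteq> cu (S r v))) in
     if cu (S r v) = Some v then (S r v)\<lparr>tm := Suc r, rj := (rj (S r v) \<or> bad), pl := True, lv := Suc (r div Suc N), pa := lb (S r v)\<rparr>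
     else (S r v)\<lparr>tm := Suc r, rj := (rj (S r v) \<or> bad), lb := cu (S r v)\<rparr>)"
proof -
  assume a: "r < T0 N" "\<not> pl (S r v)" "r mod Suc N = N"
  have "(\<exists>u\<in>set (nb (S r v)). decopt (msgs r v u) \<noteq> None \<and> decopt (msgs r v u) \<noteq> cu (S r v))
     = (\<exists>u. E v u \<and> eff N (S r u) \<noteq> None \<and> eff N (S r u) \<noteq> cu (S r v))"
    using a by (auto simp: msg_nb alg_send_def)
  then show ?thesis using a by (simp add: S_Suc alg_step_def Let_def)
qed

lemma P4: "r = T0 N \<Longrightarrow> S (Suc r) v = (S r v)\<lparr>tm := Suc r, rj := (rj (S r v) \<or> \<not> pl (S r v)),
   kd := filter (\<lambda>u. (if pl (S r u) then pa (S r u) else None) = Some v) (nb (S r v))\<rparr>"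
proof -
  assume a: "r = T0 N"
  have "filter (\<lambda>u. decopt (msgs r v u) = Some (me (S r v))) (nb (S r v)) =
        filter (\<lambda>u. (if pl (S r u) then pa (S r u) else None) = Some v) (nb (S r v))"
    using a by (intro filter_cong) (auto simp: msg_nb alg_send_def)
  then show ?thesis using a by (simp add: S_Suc alg_step_def Let_def)
qed

lemma P5: "T0 N < r \<Longrightarrow> r \<le> T0 N + N * (2*N) \<Longrightarrow>
  S (Suc r) v = (let i = r - Suc (T0 N); b = (effB N (S r v) \<or> (\<exists>u. E v u \<and> effB N (S r u))) in
        if Suc (i mod (2*N)) = 2*N then (S r v)\<lparr>tm := Suc r, bt := b, dp := (if b then Suc (i div (2*N)) else dp (S r v))\<rparr>
        else (S r v)\<lparr>tm := Suc r, bt := b\<rparr>)"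
proof -
  assume a: "T0 N < r" "r \<le> T0 N + N * (2*N)"
  have "(\<exists>u\<in>set (nb (S r v)). msgs r v u = [True]) = (\<exists>u. E v u \<and> effB N (S r u))"
    using a by (auto simp: msg_nb alg_send_def)
  then show ?thesis using a by (simp add: S_Suc alg_step_def Let_def)
qed

lemma P6: "T0 N + N * (2*N) < r \<Longrightarrow> S (Suc r) v = (S r v)\<lparr>tm := Suc r\<rparr>"
  by (simp add: S_Suc alg_step_def Let_def)

end


context alg
begin

definition okv where "okv s \<longleftrightarrow> (\<forall>x. cu s = Some x \<longrightarrow> x \<in> V) \<and> (\<forall>x. lb s = Some x \<longrightarrow> x \<in> V) \<and> (\<forall>x. pa s = Some x \<longrightarrow> x \<in> V)"

lemma eff_ok: "v \<in> V \<Longrightarrow> okv (S r v) \<Longrightarrow> eff N (S r v) = Some x \<Longrightarrow> x \<in> V"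
  by (auto simp: eff_def cand_def okv_def split: if_splits option.splits)

lemma vals_ok: "v \<in> V \<Longrightarrow> okv (S r v)"
proof (induction r arbitrary: v)
  case 0 then show ?case by (simp add: okv_def alg_init_def)
next
  case (Suc r)
  have IH: "\<And>u. u \<in> V \<Longrightarrow> okv (S r u)" using Suc.IH .
  consider (a) "r < T0 N" "pl (S r v)" | (b) "r < T0 N" "\<not> pl (S r v)" "r mod Suc N < N"
    | (c) "r < T0 N" "\<not> pl (S r v)" "r mod Suc N = N" | (d) "r = T0 N"
    | (e) "T0 N < r" "r \<le> T0 N + N * (2*N)" | (f) "T0 N + N * (2*N) < r"
    by (metis less_Suc_eq linorder_neqE_nat mod_less_divisor not_le zero_less_Suc)
  then show ?case
  proof cases
    case a then show ?thesis using P1[OF a] IH[OF Suc.prems] by (simp add: okv_def)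
  next
    case b
    let ?A = "insert (eff N (S r v)) ((\<lambda>u. eff N (S r u)) ` {u. E v u})"
    have "finite ?A" using nbr_fin by simp
    then have "Max ?A \<in> ?A" by (intro Max_in) auto
    then have "\<forall>x. Max ?A = Some x \<longrightarrow> x \<in> V"
      using eff_ok[OF Suc.prems IH[OF Suc.prems]] eff_ok IH Ein by fastforce
    then show ?thesis using P2[OF b] IH[OF Suc.prems] by (simp add: okv_def)
  next
    case c then show ?thesis using P3[OF c] IH[OF Suc.prems] by (simp add: okv_def Let_def)
  next
    case d then show ?thesis using P4[OF d] IH[OF Suc.prems] by (simp add: okv_def)
  next
    case e then show ?thesis using P5[OF e] IH[OF Suc.prems] by (simp add: okv_def Let_def)
  next
    case f then show ?thesis using P6[OF f] IH[OF Suc.prems] by (simp add: okv_def)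
  qed
qed

lemma bandwidth:
  assumes sub: "V \<subseteq> {..< (max 2 (card V)) ^ c}" and uv: "E u v"
  shows "length (alg_send N (S r u) v) \<le> (c+1) * log_bits (card V)"
proof -
  have u: "u \<in> V" using Ein[OF uv] by auto
  have bnd: "\<And>x. x \<in> V \<Longrightarrow> x < (max 2 (card V)) ^ c" using sub by auto
  have e: "\<forall>x. eff N (S r u) = Some x \<longrightarrow> x < (max 2 (card V)) ^ c"
    using eff_ok[OF u vals_ok[OF u]] bnd by blast
  have p: "\<forall>x. (if pl (S r u) then pa (S r u) else None) = Some x \<longrightarrow> x < (max 2 (card V)) ^ c"
    using vals_ok[OF u] bnd by (auto simp: okv_def)
  note def = alg_send_def[of N "S r u" v]
  show ?thesis
    using encopt_len[OF e] encopt_len[OF p] log_bits_pos[of "card V"]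
    by (simp only: def split: if_split) (auto simp del: encopt.simps)
qed

end


lemma flood_gen:
  fixes x :: "nat \<Rightarrow> nat \<Rightarrow> 'a::linorder" and Rl :: "(nat \<times> nat) set"
  assumes x0: "\<forall>v\<in>U. x 0 v = c v"
    and mono: "\<forall>j<L. \<forall>v\<in>U. x j v \<le> x (Suc j) v"
    and nbr: "\<forall>j<L. \<forall>v\<in>U. \<forall>u. (v,u) \<in> Rl \<longrightarrow> x j u \<le> x (Suc j) v"
    and pick: "\<forall>j<L. \<forall>v\<in>U. x (Suc j) v = x j v \<or> (\<exists>u. (v,u) \<in> Rl \<and> x (Suc j) v = x j u)"
    and RlU: "Rl \<subseteq> U \<times> U"
  shows "j \<le> L \<Longrightarrow> v \<in> U \<Longrightarrow> (\<forall>w. (v,w) \<in> (Id_on U \<union> Rl)^^j \<longrightarrow> c w \<le> x j v) \<and>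
      (\<exists>w. (v,w) \<in> (Id_on U \<union> Rl)^^j \<and> x j v = c w)"
proof (induction j arbitrary: v)
  case 0 then show ?case using x0 by auto
next
  case (Suc j)
  have jl: "j < L" using Suc.prems by simp
  have A: "c w \<le> x (Suc j) v" if w: "(v,w) \<in> (Id_on U \<union> Rl)^^Suc j" for w
  proof -
    obtain u where u: "(v,u) \<in> Id_on U \<union> Rl" "(u,w) \<in> (Id_on U \<union> Rl)^^j"
      using relpow_Suc_D2[OF w] by blast
    show ?thesis
    proof (cases "(v,u) \<in> Rl")
      case True
      then have "u \<in> U" using RlU by auto
      then have "c w \<le> x j u" using Suc.IH[of u] jl u by auto
      also have "\<dots> \<le> x (Suc j) v" using nbr jl Suc.prems True by auto
      finally show ?thesis .
    next
      case False
      then have "u = v" using u by auto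
      then have "c w \<le> x j v" using Suc.IH[of v] jl u Suc.prems by auto
      also have "\<dots> \<le> x (Suc j) v" using mono jl Suc.prems by auto
      finally show ?thesis .
    qed
  qed
  have B: "\<exists>w. (v,w) \<in> (Id_on U \<union> Rl)^^Suc j \<and> x (Suc j) v = c w"
  proof -
    from pick jl Suc.prems
    consider "x (Suc j) v = x j v" | u where "(v,u) \<in> Rl" "x (Suc j) v = x j u" by blast
    then show ?thesis
    proof cases
      case 1
      obtain w where "(v,w) \<in> (Id_on U \<union> Rl)^^j" "x j v = c w" using Suc.IH[of v] jl Suc.prems by auto
      moreover have "(v,v) \<in> Id_on U \<union> Rl" using Suc.prems by auto
      ultimately show ?thesis using 1 by (metis relpow_Suc_I2)
    next
      case 2
      then have "u \<in> U" using RlU by auto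
      then obtain w where "(u,w) \<in> (Id_on U \<union> Rl)^^j" "x j u = c w" using Suc.IH[of u] jl by auto
      moreover have "(v,u) \<in> Id_on U \<union> Rl" using 2 by auto
      ultimately show ?thesis using 2 by (metis relpow_Suc_I2)
    qed
  qed
  show ?case using A B by blast
qed

context alg
begin

definition frz where "frz s s' \<longleftrightarrow> pl s' = pl s \<and> lv s' = lv s \<and> pa s' = pa s \<and> lb s' = lb s \<and> rj s' = rj s \<and> kd s' = kd s \<and> dp s' = dp s"

lemma frz_cand: "frz (S r v) (S r' v) \<Longrightarrow> cand (S r' v) = cand (S r v)"
  by (simp add: frz_def cand_def split: option.splits)

lemma arith1: "k < N \<Longrightarrow> j \<le> N \<Longrightarrow> k * Suc N + j < T0 N"
proof -
  assume "k < N" "j \<le> N"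
  then have "k * Suc N + j < Suc k * Suc N" by simp
  also have "\<dots> \<le> N * Suc N" using \<open>k < N\<close> by (intro mult_le_mono1) simp
  finally show ?thesis by (simp add: T0_def)
qed

lemma arith2: "j \<le> N \<Longrightarrow> (k * Suc N + j) mod Suc N = j"
  by (metis add.commute mod_less mod_mult_self1 le_imp_less_Suc)

lemma arith3: "j \<le> N \<Longrightarrow> (k * Suc N + j) div Suc N = k"
  by (metis add.commute div_less div_mult_self1 le_imp_less_Suc add_0 nat.distinct(1))

lemma phase_frozen:
  assumes k: "k < N"
  shows "j \<le> N \<Longrightarrow> frz (S (k * Suc N) v) (S (k * Suc N + j) v)"
proof (induction j)
  case 0 then show ?case by (simp add: frz_def)
next
  case (Suc j)
  have r: "k * Suc N + j < T0 N" "(k * Suc N + j) mod Suc N < N" using arith1[OF k, of j] arith2[of j k] Suc.prems by simp_all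
  have "frz (S (k * Suc N + j) v) (S (Suc (k * Suc N + j)) v)"
    using P1[OF r(1)] P2[OF r(1) _ r(2)] by (cases "pl (S (k * Suc N + j) v)") (simp_all add: frz_def)
  then show ?case using Suc by (simp add: frz_def)
qed

definition Ufr where "Ufr r = {v\<in>V. \<not> pl (S r v)}"
definition Rfr where "Rfr r = {(a,b). E a b \<and> a \<in> Ufr r \<and> b \<in> Ufr r}"

lemma phase_flood:
  assumes k: "k < N" and v: "v \<in> Ufr (k * Suc N)"
  shows "(\<forall>w. (v,w) \<in> (Id_on (Ufr (k * Suc N)) \<union> Rfr (k * Suc N))^^N \<longrightarrow> cand (S (k * Suc N) w) \<le> cu (S (k * Suc N + N) v)) \<and>
      (\<exists>w. (v,w) \<in> (Id_on (Ufr (k * Suc N)) \<union> Rfr (k * Suc N))^^N \<and> cu (S (k * Suc N + N) v) = cand (S (k * Suc N) w))"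
proof -
  define r0 where "r0 = k * Suc N"
  define U where "U = Ufr r0"
  define x where "x j v = eff N (S (r0 + j) v)" for j v
  define c where "c w = cand (S r0 w)" for w
  have fr: "\<And>j v. j \<le> N \<Longrightarrow> frz (S r0 v) (S (r0 + j) v)" unfolding r0_def using phase_frozen[OF k] by blast
  have plj: "\<And>j v. j \<le> N \<Longrightarrow> pl (S (r0 + j) v) = pl (S r0 v)" using fr by (simp add: frz_def)
  have xj: "\<And>j v. 0 < j \<Longrightarrow> j \<le> N \<Longrightarrow> v \<in> U \<Longrightarrow> x j v = cu (S (r0 + j) v)"
    unfolding x_def eff_def U_def Ufr_def r0_def using plj[unfolded r0_def] arith2 by simp
  have x0: "\<forall>v\<in>U. x 0 v = c v" unfolding x_def c_def eff_def U_def Ufr_def r0_def using arith2[of 0 k] by (simp add: cand_def)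
  have step: "x (Suc j) v = Max (insert (x j v) ((\<lambda>u. x j u) ` {u. E v u}))" if "j < N" "v \<in> U" for j v
  proof -
    have r: "r0 + j < T0 N" "(r0 + j) mod Suc N < N" using arith1[OF k, of j] arith2[of j k] that unfolding r0_def by simp_all
    have np: "\<not> pl (S (r0 + j) v)" using plj[of j v] that by (simp add: U_def Ufr_def)
    have "x (Suc j) v = cu (S (Suc (r0 + j)) v)" using xj[of "Suc j" v] that by simp
    also have "\<dots> = Max (insert (x j v) ((\<lambda>u. x j u) ` {u. E v u}))"
      using P2[OF r(1) np r(2)] unfolding x_def by simp
    finally show ?thesis .
  qed
  have fin: "\<And>j v. finite (insert (x j v) ((\<lambda>u. x j u) ` {u. E v u}))" using nbr_fin by simp
  have mono: "\<forall>j<N. \<forall>v\<in>U. x j v \<le> x (Suc j) v" using step fin by (simp add: Max_ge)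
  have nbr: "\<forall>j<N. \<forall>v\<in>U. \<forall>u. (v,u) \<in> Rfr r0 \<longrightarrow> x j u \<le> x (Suc j) v"
    using step fin by (auto simp: Rfr_def intro!: Max_ge)
  have pick: "\<forall>j<N. \<forall>v\<in>U. x (Suc j) v = x j v \<or> (\<exists>u. (v,u) \<in> Rfr r0 \<and> x (Suc j) v = x j u)"
  proof (intro allI impI ballI)
    fix j v assume jv: "j < N" "v \<in> U"
    have "Max (insert (x j v) ((\<lambda>u. x j u) ` {u. E v u})) \<in> insert (x j v) ((\<lambda>u. x j u) ` {u. E v u})"
      by (rule Max_in[OF fin]) simp
    then have "x (Suc j) v \<in> insert (x j v) ((\<lambda>u. x j u) ` {u. E v u})"
      using step[OF jv] by simp
    then consider "x (Suc j) v = x j v" | u where "E v u" "x (Suc j) v = x j u" by auto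
    then show "x (Suc j) v = x j v \<or> (\<exists>u. (v,u) \<in> Rfr r0 \<and> x (Suc j) v = x j u)"
    proof cases
      case 2
      show ?thesis
      proof (cases "u \<in> U")
        case True then show ?thesis using 2 jv by (auto simp: Rfr_def U_def)
      next
        case False
        then have "pl (S r0 u)" using Ein[OF 2(1)] by (simp add: U_def Ufr_def)
        then have "x j u = None" using plj[of j u] jv by (simp add: x_def eff_def)
        then have "x (Suc j) v \<le> x j v" using 2 by simp
        then show ?thesis using mono jv by (metis order_antisym)
      qed
    qed simp
  qed
  have RlU: "Rfr r0 \<subseteq> U \<times> U" by (auto simp: Rfr_def U_def)
  from flood_gen[of U x c N "Rfr r0", OF x0 mono nbr pick RlU, of N v]
  have "(\<forall>w. (v,w) \<in> (Id_on U \<union> Rfr r0)^^N \<longrightarrow> c w \<le> x N v) \<and> (\<exists>w. (v,w) \<in> (Id_on U \<union> Rfr r0)^^N \<and> x N v = c w)"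
    using v by (simp add: U_def r0_def)
  moreover have "x N v = cu (S (r0 + N) v)" using xj[of N v] N2 v by (simp add: U_def r0_def)
  ultimately show ?thesis unfolding c_def U_def r0_def by simp
qed

end


lemma relpow_mono_set: "(R::('a\<times>'a) set) \<subseteq> R' \<Longrightarrow> R ^^ n \<subseteq> R' ^^ n"
  by (induction n) (simp_all add: relcomp_mono)

lemma relpow_pad: "(v,w) \<in> (X::('a\<times>'a) set) ^^ a \<Longrightarrow> (w,w) \<in> X \<Longrightarrow> (v,w) \<in> X ^^ (a + m)"
  by (induction m) (auto intro: relpow_Suc_I)

lemma relpow_rtrancl_set: "(v,w) \<in> (X::('a\<times>'a) set) ^^ n \<Longrightarrow> (v,w) \<in> X\<^sup>*"
  using relpow_imp_rtrancl by blast

context alg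
begin

definition Qf where "Qf r v = (if pl (S r v) then pa (S r v) else lb (S r v))"
definition Hf where "Hf k r v = (if pl (S r v) then lv (S r v) else Suc k)"

definition Inv where "Inv k \<longleftrightarrow> (let r = k * Suc N in
  (\<forall>v\<in>V. pl (S r v) \<longrightarrow> 1 \<le> lv (S r v) \<and> lv (S r v) \<le> k) \<and>
  (\<forall>v\<in>V. Qf r v = None \<longleftrightarrow> Hf k r v = 1) \<and>
  (\<forall>v\<in>V. \<forall>w. Qf r v = Some w \<longrightarrow> w \<in> V \<and> pl (S r w) \<and> Suc (Hf k r w) = Hf k r v) \<and>
  (\<forall>v\<in>V. \<forall>w. pl (S r v) \<longrightarrow> pa (S r v) = Some w \<longrightarrow> E v w) \<and>
  (\<forall>u v. E u v \<longrightarrow> pl (S r u) \<or> pl (S r v) \<longrightarrow> ancestor V (Qf r) u v \<or> ancestor V (Qf r) v u) \<and>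
  (\<forall>u v. E u v \<longrightarrow> \<not> pl (S r u) \<longrightarrow> \<not> pl (S r v) \<longrightarrow> lb (S r u) = lb (S r v)) \<and>
  (\<forall>v\<in>V. \<not> pl (S r v) \<longrightarrow> (case lb (S r v) of None \<Rightarrow> k = 0 | Some a \<Rightarrow> \<exists>y. (v,y) \<in> (Rfr r)\<^sup>* \<and> E y a)) \<and>
  (1 \<le> k \<longrightarrow> (\<exists>!x. x \<in> V \<and> Qf r x = None)) \<and>
  (k = 0 \<longrightarrow> (\<forall>v\<in>V. \<not> pl (S r v) \<and> lb (S r v) = None)))"

definition Good where "Good k \<longleftrightarrow> (let r = k * Suc N in
  \<forall>v\<in>Ufr r. cu (S (r + N) v) \<noteq> None \<and> (\<forall>u. E v u \<longrightarrow> u \<in> Ufr r \<longrightarrow> cu (S (r + N) u) = cu (S (r + N) v)))"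

lemma Inv0: "Inv 0"
  by (simp add: Inv_def Qf_def Hf_def alg_init_def)

lemma Rfr_sym: "(a,b) \<in> Rfr r \<Longrightarrow> (b,a) \<in> Rfr r"
  using Ein by (auto simp: Rfr_def)

lemma Rfr_rtrancl_sym: "(a,b) \<in> (Rfr r)\<^sup>* \<Longrightarrow> (b,a) \<in> (Rfr r)\<^sup>*"
proof (induction rule: rtrancl_induct)
  case (step y z) then show ?case using Rfr_sym by (meson converse_rtrancl_into_rtrancl)
qed simp

lemma Rfr_rtrancl_U: "(a,b) \<in> (Rfr r)\<^sup>* \<Longrightarrow> a \<in> Ufr r \<Longrightarrow> b \<in> Ufr r"
  by (induction rule: rtrancl_induct) (auto simp: Rfr_def)

lemma relpow_Rfr: "(v,w) \<in> (Id_on (Ufr r) \<union> Rfr r) ^^ n \<Longrightarrow> (v,w) \<in> (Rfr r)\<^sup>*"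
proof -
  assume "(v,w) \<in> (Id_on (Ufr r) \<union> Rfr r) ^^ n"
  then have "(v,w) \<in> (Id_on (Ufr r) \<union> Rfr r)\<^sup>*" by (rule relpow_rtrancl_set)
  moreover have "(Id_on (Ufr r) \<union> Rfr r)\<^sup>* \<subseteq> (Rfr r)\<^sup>*"
    by (metis rtrancl_reflcl rtrancl_subset_rtrancl Un_least r_into_rtrancl subrelI IdI Un_iff Id_onE)
  ultimately show ?thesis by blast
qed

end


context alg
begin

definition badv where "badv r v \<longleftrightarrow> cu (S r v) = None \<or> (\<exists>u. E v u \<and> eff N (S r u) \<noteq> None \<and> eff N (S r u) \<noteq> cu (S r v))"

lemma r1_eq: "Suc k * Suc N = Suc (k * Suc N + N)" by simp

lemma phase_end:
  assumes k: "k < N"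
  defines "r0 \<equiv> k * Suc N"
  shows "pl (S r0 v) \<Longrightarrow> pl (S (Suc k * Suc N) v) \<and> lv (S (Suc k * Suc N) v) = lv (S r0 v) \<and>
            pa (S (Suc k * Suc N) v) = pa (S r0 v) \<and> lb (S (Suc k * Suc N) v) = lb (S r0 v) \<and>
            rj (S (Suc k * Suc N) v) = rj (S r0 v)"
    and "\<not> pl (S r0 v) \<Longrightarrow> cu (S (r0 + N) v) = Some v \<Longrightarrow> pl (S (Suc k * Suc N) v) \<and>
            lv (S (Suc k * Suc N) v) = Suc k \<and> pa (S (Suc k * Suc N) v) = lb (S r0 v) \<and>
            lb (S (Suc k * Suc N) v) = lb (S r0 v)"
    and "\<not> pl (S r0 v) \<Longrightarrow> cu (S (r0 + N) v) \<noteq> Some v \<Longrightarrow> \<not> pl (S (Suc k * Suc N) v) \<and>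
            lb (S (Suc k * Suc N) v) = cu (S (r0 + N) v)"
    and "rj (S (Suc k * Suc N) v) = (rj (S r0 v) \<or> (\<not> pl (S r0 v) \<and> badv (r0 + N) v))"
proof -
  have fr: "frz (S r0 v) (S (r0 + N) v)" using phase_frozen[OF k, of N v] by (simp add: r0_def)
  have r: "r0 + N < T0 N" "(r0 + N) mod Suc N = N" "(r0 + N) div Suc N = k"
    using arith1[OF k, of N] arith2[of N k] arith3[of N k] by (simp_all add: r0_def)
  have e: "S (Suc k * Suc N) v = S (Suc (r0 + N)) v" by (rule arg_cong[where f="\<lambda>r. S r v"]) (simp add: r0_def)
  show "pl (S r0 v) \<Longrightarrow> pl (S (Suc k * Suc N) v) \<and> lv (S (Suc k * Suc N) v) = lv (S r0 v) \<and>
            pa (S (Suc k * Suc N) v) = pa (S r0 v) \<and> lb (S (Suc k * Suc N) v) = lb (S r0 v) \<and>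
            rj (S (Suc k * Suc N) v) = rj (S r0 v)"
    using P1[OF r(1), of v] fr e by (simp add: frz_def)
  show "\<not> pl (S r0 v) \<Longrightarrow> cu (S (r0 + N) v) = Some v \<Longrightarrow> pl (S (Suc k * Suc N) v) \<and>
            lv (S (Suc k * Suc N) v) = Suc k \<and> pa (S (Suc k * Suc N) v) = lb (S r0 v) \<and>
            lb (S (Suc k * Suc N) v) = lb (S r0 v)"
    using P3[OF r(1) _ r(2), of v] fr e r(3) by (simp add: frz_def Let_def)
  show "\<not> pl (S r0 v) \<Longrightarrow> cu (S (r0 + N) v) \<noteq> Some v \<Longrightarrow> \<not> pl (S (Suc k * Suc N) v) \<and>
            lb (S (Suc k * Suc N) v) = cu (S (r0 + N) v)"
    using P3[OF r(1) _ r(2), of v] fr e by (simp add: frz_def Let_def)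
  show "rj (S (Suc k * Suc N) v) = (rj (S r0 v) \<or> (\<not> pl (S r0 v) \<and> badv (r0 + N) v))"
  proof (cases "pl (S r0 v)")
    case True then show ?thesis using P1[OF r(1), of v] fr e by (simp add: frz_def)
  next
    case False
    then have "\<not> pl (S (r0 + N) v)" using fr by (simp add: frz_def)
    then show ?thesis using P3[OF r(1) _ r(2), of v] fr e False by (simp add: frz_def Let_def badv_def)
  qed
qed

end


context alg
begin

lemma transition:
  assumes k: "k < N" and I: "Inv k" and Gd: "Good k"
  shows "Inv (Suc k)"
proof -
  define r0 where "r0 = k * Suc N"
  define r1 where "r1 = Suc k * Suc N"
  define m where "m v = cu (S (r0 + N) v)" for v
  define U where "U = Ufr r0"
  define R where "R = Rfr r0"
  note IA = I[unfolded Inv_def Let_def, folded r0_def, folded R_def]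
  have I1: "\<forall>v\<in>V. pl (S r0 v) \<longrightarrow> 1 \<le> lv (S r0 v) \<and> lv (S r0 v) \<le> k" using IA[THEN conjunct1] .
  have I2: "\<forall>v\<in>V. Qf r0 v = None \<longleftrightarrow> Hf k r0 v = 1" using IA[THEN conjunct2, THEN conjunct1] .
  have I3: "\<forall>v\<in>V. \<forall>w. Qf r0 v = Some w \<longrightarrow> w \<in> V \<and> pl (S r0 w) \<and> Suc (Hf k r0 w) = Hf k r0 v" using IA[THEN conjunct2, THEN conjunct2, THEN conjunct1] .
  have I4: "\<forall>v\<in>V. \<forall>w. pl (S r0 v) \<longrightarrow> pa (S r0 v) = Some w \<longrightarrow> E v w" using IA[THEN conjunct2, THEN conjunct2, THEN conjunct2, THEN conjunct1] .
  have I5: "\<forall>u v. E u v \<longrightarrow> pl (S r0 u) \<or> pl (S r0 v) \<longrightarrow> ancestor V (Qf r0) u v \<or> ancestor V (Qf r0) v u" using IA[THEN conjunct2, THEN conjunct2, THEN conjunct2, THEN conjunct2, THEN conjunct1] .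
  have I6: "\<forall>u v. E u v \<longrightarrow> \<not> pl (S r0 u) \<longrightarrow> \<not> pl (S r0 v) \<longrightarrow> lb (S r0 u) = lb (S r0 v)" using IA[THEN conjunct2, THEN conjunct2, THEN conjunct2, THEN conjunct2, THEN conjunct2, THEN conjunct1] .
  have I7: "\<forall>v\<in>V. \<not> pl (S r0 v) \<longrightarrow> (case lb (S r0 v) of None \<Rightarrow> k = 0 | Some a \<Rightarrow> \<exists>y. (v,y) \<in> R\<^sup>* \<and> E y a)" using IA[THEN conjunct2, THEN conjunct2, THEN conjunct2, THEN conjunct2, THEN conjunct2, THEN conjunct2, THEN conjunct1] .
  have I8: "1 \<le> k \<longrightarrow> (\<exists>!x. x \<in> V \<and> Qf r0 x = None)" using IA[THEN conjunct2, THEN conjunct2, THEN conjunct2, THEN conjunct2, THEN conjunct2, THEN conjunct2, THEN conjunct2, THEN conjunct1] .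
  have I9: "k = 0 \<longrightarrow> (\<forall>v\<in>V. \<not> pl (S r0 v) \<and> lb (S r0 v) = None)" using IA[THEN conjunct2, THEN conjunct2, THEN conjunct2, THEN conjunct2, THEN conjunct2, THEN conjunct2, THEN conjunct2, THEN conjunct2] .
  have G0: "\<forall>v\<in>U. m v \<noteq> None" and Gn: "\<forall>v\<in>U. \<forall>u. E v u \<longrightarrow> u \<in> U \<longrightarrow> m u = m v"
    using Gd unfolding Good_def Let_def m_def U_def r0_def by auto
  have UV: "U \<subseteq> V" by (auto simp: U_def Ufr_def)
  have inU: "v \<in> U \<longleftrightarrow> v \<in> V \<and> \<not> pl (S r0 v)" for v by (simp add: U_def Ufr_def)
  have RE: "(a,b) \<in> R \<longleftrightarrow> E a b \<and> a \<in> U \<and> b \<in> U" for a b by (simp add: R_def Rfr_def U_def)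
  note pe = phase_end[OF k, folded r0_def r1_def m_def]
  have comp_m: "(v,w) \<in> R\<^sup>* \<Longrightarrow> m v = m w" for v w
  proof (induction rule: rtrancl_induct)
    case (step y z) then show ?case using Gn RE by metis
  qed simp
  have comp_lb: "(v,w) \<in> R\<^sup>* \<Longrightarrow> lb (S r0 v) = lb (S r0 w)" for v w
  proof (induction rule: rtrancl_induct)
    case (step y z) then show ?case using I6 RE inU by metis
  qed simp
  have comp_U: "(v,w) \<in> R\<^sup>* \<Longrightarrow> v \<in> U \<Longrightarrow> w \<in> U" for v w
    unfolding R_def U_def by (rule Rfr_rtrancl_U)
  have pick: "\<exists>x. m v = Some x \<and> x \<in> U \<and> (v,x) \<in> R\<^sup>* \<and> cand (S r0 x) = Some x" if v: "v \<in> U" for v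
  proof -
    from phase_flood[OF k, of v] v obtain w where w: "(v,w) \<in> (Id_on U \<union> R)^^N" "m v = cand (S r0 w)"
      by (auto simp: U_def R_def m_def r0_def)
    have vw: "(v,w) \<in> R\<^sup>*" using relpow_Rfr w(1) by (simp add: R_def U_def)
    have wU: "w \<in> U" using comp_U[OF vw v] .
    have "m v \<noteq> None" using G0 v by blast
    then have "cand (S r0 w) \<noteq> None" using w(2) by simp
    then have "cand (S r0 w) = Some w" by (auto simp: cand_def split: if_splits option.splits)
    then show ?thesis using w vw wU by auto
  qed
  define nr where "nr v \<longleftrightarrow> v \<in> U \<and> m v = Some v" for v
  define rem where "rem v \<longleftrightarrow> v \<in> U \<and> m v \<noteq> Some v" for v
  have xroot: "nr x \<and> lb (S r0 x) = lb (S r0 v) \<and> (v,x) \<in> R\<^sup>* \<and> cand (S r0 x) = Some x"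
    if a: "v \<in> U" "m v = Some x" for v x
  proof -
    obtain x' where x': "m v = Some x'" "x' \<in> U" "(v,x') \<in> R\<^sup>*" "cand (S r0 x') = Some x'" using pick[OF a(1)] by blast
    have "x' = x" using x'(1) a(2) by simp
    then show ?thesis using x' comp_m[OF x'(3)] comp_lb[OF x'(3)] a by (auto simp: nr_def)
  qed
  have Fpl: "pl (S r1 v) \<longleftrightarrow> pl (S r0 v) \<or> nr v" if "v \<in> V" for v
    using pe(1)[of v] pe(2)[of v] pe(3)[of v] that by (auto simp: m_def m_def nr_def inU)
  have QHkeep: "Qf r1 v = Qf r0 v \<and> Hf (Suc k) r1 v = Hf k r0 v" if "v \<in> V" "pl (S r1 v)" for v
  proof (cases "pl (S r0 v)")
    case True then show ?thesis using pe(1)[of v] by (simp add: m_def Qf_def Hf_def)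
  next
    case False
    then have "nr v" using Fpl that by blast
    then show ?thesis using pe(2)[of v] False by (simp add: m_def Qf_def Hf_def nr_def)
  qed
  have QHrem: "Qf r1 v = m v \<and> Hf (Suc k) r1 v = Suc (Suc k) \<and> \<not> pl (S r1 v)" if "rem v" for v
    using pe(3)[of v] that by (simp add: m_def Qf_def Hf_def rem_def inU)
  have cases_v: "v \<in> V \<Longrightarrow> pl (S r1 v) \<or> rem v" for v
    using Fpl by (auto simp: rem_def nr_def inU)
  have remU: "rem v \<Longrightarrow> v \<in> U" for v by (simp add: rem_def)
  have rem_x: "\<exists>x. m v = Some x \<and> nr x \<and> x \<noteq> v \<and> lb (S r0 x) = lb (S r0 v) \<and> (v,x) \<in> R\<^sup>* \<and> cand (S r0 x) = Some x" if a: "rem v" for v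
  proof -
    obtain x where "m v = Some x" using G0 a by (auto simp: rem_def)
    then show ?thesis using xroot[of v x] a by (auto simp: rem_def)
  qed
  have nrV: "nr x \<Longrightarrow> x \<in> V" for x using UV by (auto simp: nr_def)
  have nr_pl1: "nr x \<Longrightarrow> pl (S r1 x)" for x using Fpl nrV by blast
  have J1: "\<forall>v\<in>V. pl (S r1 v) \<longrightarrow> 1 \<le> lv (S r1 v) \<and> lv (S r1 v) \<le> Suc k"
  proof (intro ballI impI)
    fix v assume v: "v \<in> V" "pl (S r1 v)"
    show "1 \<le> lv (S r1 v) \<and> lv (S r1 v) \<le> Suc k"
    proof (cases "pl (S r0 v)")
      case True then show ?thesis using pe(1)[of v] I1 v by (auto simp: m_def)
    next
      case False then have "nr v" using Fpl v by blast
      then show ?thesis using pe(2)[of v] False by (simp add: m_def nr_def)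
    qed
  qed
  have J2: "\<forall>v\<in>V. Qf r1 v = None \<longleftrightarrow> Hf (Suc k) r1 v = 1"
  proof
    fix v assume v: "v \<in> V"
    show "Qf r1 v = None \<longleftrightarrow> Hf (Suc k) r1 v = 1"
    proof (cases "pl (S r1 v)")
      case True then show ?thesis using QHkeep[OF v True] I2 v by simp
    next
      case False then have "rem v" using cases_v v by blast
      then show ?thesis using QHrem G0 remU by auto
    qed
  qed
  have J3: "\<forall>v\<in>V. \<forall>w. Qf r1 v = Some w \<longrightarrow> w \<in> V \<and> pl (S r1 w) \<and> Suc (Hf (Suc k) r1 w) = Hf (Suc k) r1 v"
  proof (intro ballI allI impI)
    fix v w assume v: "v \<in> V" and q: "Qf r1 v = Some w"
    show "w \<in> V \<and> pl (S r1 w) \<and> Suc (Hf (Suc k) r1 w) = Hf (Suc k) r1 v"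
    proof (cases "pl (S r1 v)")
      case True
      then have "Qf r0 v = Some w" using QHkeep[OF v True] q by simp
      then have w: "w \<in> V" "pl (S r0 w)" "Suc (Hf k r0 w) = Hf k r0 v" using I3 v by auto
      then have "pl (S r1 w)" using Fpl by blast
      then show ?thesis using QHkeep[OF w(1)] QHkeep[OF v True] w by simp
    next
      case False then have r: "rem v" using cases_v v by blast
      then obtain x where x: "m v = Some x" "nr x" using rem_x by blast
      have "w = x" using QHrem[OF r] q x by simp
      moreover have "Hf (Suc k) r1 x = Suc k" using pe(2)[of x] x(2) by (simp add: m_def Hf_def nr_def inU)
      ultimately show ?thesis using x nrV nr_pl1 QHrem[OF r] by simp
    qed
  qed
  have J4: "\<forall>v\<in>V. \<forall>w. pl (S r1 v) \<longrightarrow> pa (S r1 v) = Some w \<longrightarrow> E v w"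
  proof (intro ballI allI impI)
    fix v w assume v: "v \<in> V" "pl (S r1 v)" "pa (S r1 v) = Some w"
    show "E v w"
    proof (cases "pl (S r0 v)")
      case True then show ?thesis using pe(1)[of v] I4 v by (auto simp: m_def)
    next
      case False
      then have n: "nr v" using Fpl v by blast
      then have "lb (S r0 v) = Some w" using pe(2)[of v] v False by (simp add: m_def nr_def)
      moreover have "cand (S r0 v) = Some v" using xroot[of v v] n by (simp add: nr_def)
      ultimately show ?thesis using False by (auto simp: cand_def split: if_splits)
    qed
  qed
  have PR0_pl: "(a,b) \<in> PR V (Qf r0) \<Longrightarrow> pl (S r0 b) \<and> b \<in> V" for a b
    using I3 by (auto simp: parent_rel_def)
  have PR0_trancl_pl: "(a,b) \<in> (PR V (Qf r0))\<^sup>+ \<Longrightarrow> pl (S r0 b) \<and> b \<in> V" for a b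
    by (induction rule: trancl_induct) (auto dest: PR0_pl)
  have anc_pres: "(a,b) \<in> (PR V (Qf r0))\<^sup>+ \<Longrightarrow> pl (S r1 a) \<Longrightarrow> (a,b) \<in> (PR V (Qf r1))\<^sup>+" for a b
  proof (induction rule: converse_trancl_induct)
    case (base a)
    then have "a \<in> V" "Qf r0 a = Some b" by (auto simp: parent_rel_def)
    then show ?case using QHkeep base by (auto simp: parent_rel_def)
  next
    case (step a c)
    then have a: "a \<in> V" "Qf r0 a = Some c" by (auto simp: parent_rel_def)
    then have "(a,c) \<in> PR V (Qf r1)" using QHkeep step by (auto simp: parent_rel_def)
    moreover have "pl (S r1 c)" using PR0_pl[OF step(1)] Fpl by blast
    ultimately show ?case using step by (meson trancl_into_trancl2)
  qed
  have anc_pres': "(a,b) \<in> (PR V (Qf r0))\<^sup>* \<Longrightarrow> pl (S r1 a) \<Longrightarrow> (a,b) \<in> (PR V (Qf r1))\<^sup>*" for a b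
    using anc_pres by (metis rtrancl_eq_or_trancl trancl_into_rtrancl)
  have rem_edge: "(v, x) \<in> PR V (Qf r1)" if "rem v" "m v = Some x" for v x
    using QHrem[OF that(1)] that UV by (auto simp: parent_rel_def rem_def)
  have unpl_up: "(v,a) \<in> (PR V (Qf r1))\<^sup>+" if "v \<in> U" "Qf r0 v = Some a" for v a
  proof (cases "nr v")
    case True
    then have "Qf r1 v = Some a" using QHkeep[of v] nr_pl1 nrV that by simp
    then show ?thesis using that UV by (auto simp: parent_rel_def)
  next
    case False
    then have r: "rem v" using that by (simp add: rem_def nr_def)
    then obtain x where x: "m v = Some x" "nr x" "lb (S r0 x) = lb (S r0 v)" using rem_x by blast
    have "Qf r0 x = Qf r0 v" using x(3) x(2) that(1) by (simp add: Qf_def nr_def inU)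
    then have "Qf r1 x = Some a" using QHkeep[of x] nr_pl1[OF x(2)] nrV[OF x(2)] that by simp
    then have "(x,a) \<in> PR V (Qf r1)" using nrV[OF x(2)] by (simp add: parent_rel_def)
    then show ?thesis using rem_edge[OF r x(1)] that by auto
  qed
  have J5: "\<forall>u v. E u v \<longrightarrow> pl (S r1 u) \<or> pl (S r1 v) \<longrightarrow> ancestor V (Qf r1) u v \<or> ancestor V (Qf r1) v u"
  proof (intro allI impI)
    fix u v assume uv: "E u v" and p: "pl (S r1 u) \<or> pl (S r1 v)"
    have uvV: "u \<in> V" "v \<in> V" "u \<noteq> v" "E v u" using Ein[OF uv] by auto
    have mixed: "ancestor V (Qf r1) a b" if ab: "E a b" "pl (S r0 a)" "\<not> pl (S r0 b)" for a b
    proof -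
      have abV: "a \<in> V" "b \<in> V" using Ein[OF ab(1)] by auto
      from I5 ab have "ancestor V (Qf r0) a b \<or> ancestor V (Qf r0) b a" by blast
      then have "(b,a) \<in> (PR V (Qf r0))\<^sup>+"
        using PR0_trancl_pl ab(3) by (auto simp: ancestor_def)
      then obtain c where c: "(b,c) \<in> PR V (Qf r0)" "(c,a) \<in> (PR V (Qf r0))\<^sup>*" by (meson tranclD)
      have bU: "b \<in> U" using abV ab by (simp add: inU)
      have qb: "Qf r0 b = Some c" using c(1) by (simp add: parent_rel_def)
      have "pl (S r1 c)" using PR0_pl[OF c(1)] Fpl by blast
      then have "(c,a) \<in> (PR V (Qf r1))\<^sup>*" using anc_pres' c(2) by blast
      moreover have "(b,c) \<in> (PR V (Qf r1))\<^sup>+" using unpl_up[OF bU qb] .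
      ultimately show ?thesis by (auto simp: ancestor_def)
    qed
    consider (pp) "pl (S r0 u)" "pl (S r0 v)" | (pu) "pl (S r0 u)" "\<not> pl (S r0 v)"
      | (up) "\<not> pl (S r0 u)" "pl (S r0 v)" | (uu) "\<not> pl (S r0 u)" "\<not> pl (S r0 v)" by blast
    then show "ancestor V (Qf r1) u v \<or> ancestor V (Qf r1) v u"
    proof cases
      case pp
      then have "ancestor V (Qf r0) u v \<or> ancestor V (Qf r0) v u" using I5 uv by blast
      moreover have "pl (S r1 u)" "pl (S r1 v)" using pp Fpl uvV by blast+
      ultimately show ?thesis using anc_pres by (auto simp: ancestor_def)
    next
      case pu then show ?thesis using mixed uv by blast
    next
      case up then show ?thesis using mixed uvV(4) by blast
    next
      case uu
      have U2: "u \<in> U" "v \<in> U" using uu uvV by (auto simp: inU)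
      have mm: "m u = m v" using Gn U2 uvV(4) by metis
      have gen: "ancestor V (Qf r1) a b" if "nr a" "b \<in> U" "m b = m a" "a \<noteq> b" for a b
      proof -
        have "rem b" using that by (auto simp: nr_def rem_def)
        moreover have "m b = Some a" using that by (simp add: nr_def)
        ultimately show ?thesis using rem_edge by (auto simp: ancestor_def)
      qed
      from p have "nr u \<or> nr v" using Fpl uu uvV by blast
      then show ?thesis using gen U2 mm uvV(3) by metis
    qed
  qed
  have J6: "\<forall>u v. E u v \<longrightarrow> \<not> pl (S r1 u) \<longrightarrow> \<not> pl (S r1 v) \<longrightarrow> lb (S r1 u) = lb (S r1 v)"
  proof (intro allI impI)
    fix u v assume uv: "E u v" "\<not> pl (S r1 u)" "\<not> pl (S r1 v)"
    have "rem u" "rem v" using cases_v uv Ein by blast+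
    moreover then have "m u = m v" using Gn uv Ein remU by metis
    ultimately show "lb (S r1 u) = lb (S r1 v)" using pe(3) by (simp add: rem_def inU m_def)
  qed
  have J7: "\<forall>v\<in>V. \<not> pl (S r1 v) \<longrightarrow> (case lb (S r1 v) of None \<Rightarrow> Suc k = 0 | Some a \<Rightarrow> \<exists>y. (v,y) \<in> (Rfr r1)\<^sup>* \<and> E y a)"
  proof (intro ballI impI)
    fix v assume v: "v \<in> V" "\<not> pl (S r1 v)"
    then have r: "rem v" using cases_v by blast
    then obtain x where x: "m v = Some x" "nr x" "x \<noteq> v" "(v,x) \<in> R\<^sup>*" using rem_x by blast
    have lbv: "lb (S r1 v) = Some x" using pe(3)[of v] r x(1) by (simp add: rem_def inU m_def)
    have remR: "rem w" if "(w,x) \<in> R\<^sup>*" "w \<noteq> x" for w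
    proof -
      have "(x,w) \<in> R\<^sup>*" using that(1) unfolding R_def by (rule Rfr_rtrancl_sym)
      then have "w \<in> U" using comp_U x(2) by (simp add: nr_def)
      moreover have "m w = Some x" using comp_m[OF that(1)] x(2) by (simp add: nr_def)
      ultimately show ?thesis using that(2) by (simp add: rem_def)
    qed
    have "\<forall>w. (w,x) \<in> R\<^sup>* \<longrightarrow> w \<noteq> x \<longrightarrow> (\<exists>y. (w,y) \<in> (Rfr r1)\<^sup>* \<and> E y x)"
    proof (intro allI impI)
      fix w assume "(w,x) \<in> R\<^sup>*" "w \<noteq> x"
      then show "\<exists>y. (w,y) \<in> (Rfr r1)\<^sup>* \<and> E y x"
      proof (induction rule: converse_rtrancl_induct)
        case base then show ?case by simp
      next
        case (step w w')
        show ?case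
        proof (cases "w' = x")
          case True then show ?thesis using step(1) RE by auto
        next
          case False
          then obtain y where y: "(w',y) \<in> (Rfr r1)\<^sup>*" "E y x" using step by blast
          have "rem w" "rem w'" using remR step False by (auto intro: converse_rtrancl_into_rtrancl)
          then have "(w,w') \<in> Rfr r1" using QHrem step(1) RE remU UV by (auto simp: Rfr_def Ufr_def r1_def)
          then show ?thesis using y by (meson converse_rtrancl_into_rtrancl)
        qed
      qed
    qed
    then show "case lb (S r1 v) of None \<Rightarrow> Suc k = 0 | Some a \<Rightarrow> \<exists>y. (v,y) \<in> (Rfr r1)\<^sup>* \<and> E y a"
      using lbv x by simp
  qed
  have J8: "\<exists>!x. x \<in> V \<and> Qf r1 x = None"
  proof (cases "k = 0")
    case True
    then have allU: "\<forall>v\<in>V. v \<in> U" using I9 inU by blast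
    have roots: "x \<in> V \<and> Qf r1 x = None \<longleftrightarrow> nr x" for x
    proof
      assume a: "x \<in> V \<and> Qf r1 x = None"
      show "nr x"
      proof (rule ccontr)
        assume "\<not> nr x"
        then have "rem x" using allU a by (auto simp: rem_def nr_def)
        then have "m x \<noteq> None" using G0 remU by blast
        then show False using QHrem[OF \<open>rem x\<close>] a by simp
      qed
    next
      assume n: "nr x"
      then have "Qf r1 x = Qf r0 x" using QHkeep nr_pl1 nrV by blast
      moreover have "Qf r0 x = None" using I9 True nrV[OF n] by (simp add: Qf_def)
      ultimately show "x \<in> V \<and> Qf r1 x = None" using nrV[OF n] by simp
    qed
    have allR: "(u,v) \<in> R\<^sup>*" if "u \<in> V" "v \<in> V" for u v
    proof -
      have "(u,v) \<in> {(x,y). E x y}\<^sup>*" using conn that by (auto simp: connected_graph_def)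
      moreover have "{(x,y). E x y} \<subseteq> R" using allU Ein RE by auto
      ultimately show ?thesis using rtrancl_mono by blast
    qed
    obtain v0 where v0: "v0 \<in> V" using neV by blast
    obtain x where x: "m v0 = Some x" "nr x" using pick[of v0] allU v0 xroot by blast
    have "nr y \<Longrightarrow> y = x" for y
      using comp_m[OF allR[OF v0 nrV]] x by (simp add: nr_def)
    then show ?thesis using roots x by blast
  next
    case False
    then have ex: "\<exists>!x. x \<in> V \<and> Qf r0 x = None" using I8 by simp
    have "x \<in> V \<and> Qf r1 x = None \<longleftrightarrow> x \<in> V \<and> Qf r0 x = None" for x
    proof (cases "x \<in> V \<and> pl (S r1 x)")
      case True then show ?thesis using QHkeep by auto
    next
      case nt: False
      show ?thesis
      proof (cases "x \<in> V")
        case True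
        then have r: "rem x" using nt cases_v by blast
        have "Qf r1 x \<noteq> None" using QHrem[OF r] G0 remU[OF r] by simp
        moreover have "Hf k r0 x = Suc k" using r by (simp add: Hf_def rem_def inU)
        then have "Qf r0 x \<noteq> None" using I2 True False by simp
        ultimately show ?thesis by force
      qed simp
    qed
    then show ?thesis using ex by simp
  qed
  show ?thesis unfolding Inv_def Let_def r1_def[symmetric]
    using J1 J2 J3 J4 J5 J6 J7 J8 by simp
qed

end


lemma relpow_sym: "(\<forall>a b. (a,b) \<in> X \<longrightarrow> (b,a) \<in> X) \<Longrightarrow> (v,w) \<in> (X::('a\<times>'a) set)^^n \<Longrightarrow> (w,v) \<in> X^^n"
proof (induction n arbitrary: v)
  case (Suc n)
  obtain u where "(v,u) \<in> X" "(u,w) \<in> X^^n" using relpow_Suc_D2[OF Suc.prems(2)] by blast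
  then show ?case using Suc by (meson relpow_Suc_I)
qed simp

lemma rp_relpow: "rtrancl_path r v xs w \<Longrightarrow> (v,w) \<in> {(a,b). r a b}^^(length xs)"
proof (induction rule: rtrancl_path.induct)
  case (step x y ys z)
  have "(x,y) \<in> {(a,b). r a b}" using step(1) by simp
  from relpow_Suc_I2[OF this step(3)] show ?case by simp
qed simp

lemma rp_epath: "rtrancl_path r v xs w \<Longrightarrow> (\<forall>a b. r a b \<longrightarrow> E a b) \<Longrightarrow> epath E (v # xs)"
proof (induction rule: rtrancl_path.induct)
  case (base x) then show ?case by (simp add: epath_def)
next
  case (step x y ys z)
  then show ?case by (simp add: epath_Cons)
qed

lemma rp_set: "rtrancl_path r v xs w \<Longrightarrow> v \<in> A \<Longrightarrow> (\<forall>a b. r a b \<longrightarrow> b \<in> A) \<Longrightarrow> set (v # xs) \<subseteq> A"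
  by (induction rule: rtrancl_path.induct) auto

context alg
begin

definition short where "short \<longleftrightarrow> (\<forall>ps. epath E ps \<longrightarrow> distinct ps \<longrightarrow> set ps \<subseteq> V \<longrightarrow> length ps < N)"

lemma inv_all:
  assumes "\<forall>k<N. Inv k \<longrightarrow> Good k"
  shows "k \<le> N \<Longrightarrow> Inv k"
proof (induction k)
  case 0 then show ?case using Inv0 by simp
next
  case (Suc k) then show ?case using assms transition by simp
qed

lemma NR_good:
  assumes k: "k < N" and nr: "\<forall>v\<in>V. \<not> rj (S (Suc k * Suc N) v)"
  shows "Good k"
proof -
  define r0 where "r0 = k * Suc N"
  have nb: "\<not> badv (r0 + N) v" if "v \<in> Ufr r0" for v
    using phase_end(4)[OF k, of v] nr that by (auto simp: Ufr_def r0_def)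
  have fr: "pl (S (r0 + N) v) = pl (S r0 v)" for v
    using phase_frozen[OF k, of N v] by (simp add: frz_def r0_def)
  have modN: "(r0 + N) mod Suc N = N" using arith2[of N k] by (simp add: r0_def)
  have effu: "eff N (S (r0 + N) u) = cu (S (r0 + N) u)" if "u \<in> Ufr r0" for u
    using that fr modN N2 by (simp add: eff_def Ufr_def)
  show ?thesis unfolding Good_def Let_def r0_def[symmetric]
  proof (intro ballI conjI allI impI)
    fix v assume v: "v \<in> Ufr r0"
    show "cu (S (r0 + N) v) \<noteq> None" using nb[OF v] by (simp add: badv_def)
    fix u assume u: "E v u" "u \<in> Ufr r0"
    have "cu (S (r0 + N) u) \<noteq> None" using nb[OF u(2)] by (simp add: badv_def)
    then show "cu (S (r0 + N) u) = cu (S (r0 + N) v)" using nb[OF v] u effu[OF u(2)] by (auto simp: badv_def)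
  qed
qed

lemma good_norj:
  assumes k: "k < N" and g: "Good k" and v: "v \<in> V"
  shows "rj (S (Suc k * Suc N) v) = rj (S (k * Suc N) v)"
proof -
  define r0 where "r0 = k * Suc N"
  have fr: "pl (S (r0 + N) u) = pl (S r0 u)" for u
    using phase_frozen[OF k, of N u] by (simp add: frz_def r0_def)
  have modN: "(r0 + N) mod Suc N = N" using arith2[of N k] by (simp add: r0_def)
  have "\<not> badv (r0 + N) v" if "\<not> pl (S r0 v)"
  proof -
    have vU: "v \<in> Ufr r0" using v that by (simp add: Ufr_def)
    have G: "\<forall>v\<in>Ufr r0. cu (S (r0 + N) v) \<noteq> None \<and> (\<forall>u. E v u \<longrightarrow> u \<in> Ufr r0 \<longrightarrow> cu (S (r0 + N) u) = cu (S (r0 + N) v))"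
      using g unfolding Good_def Let_def r0_def .
    have "cu (S (r0 + N) v) \<noteq> None" using G vU by blast
    moreover have "eff N (S (r0 + N) u) = None \<or> eff N (S (r0 + N) u) = cu (S (r0 + N) v)" if "E v u" for u
    proof (cases "pl (S r0 u)")
      case True then show ?thesis using fr by (simp add: eff_def)
    next
      case False
      then have uU: "u \<in> Ufr r0" using Ein[OF that] by (simp add: Ufr_def)
      then have "eff N (S (r0 + N) u) = cu (S (r0 + N) u)" using fr modN N2 by (simp add: eff_def Ufr_def)
      then show ?thesis using G vU uU that by auto
    qed
    ultimately show ?thesis by (auto simp: badv_def)
  qed
  then show ?thesis using phase_end(4)[OF k, of v] by (auto simp: r0_def)
qed

lemma cover:
  assumes sh: short and vw: "(v,w) \<in> (Rfr r)\<^sup>*" and v: "v \<in> Ufr r"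
  shows "(v,w) \<in> (Id_on (Ufr r) \<union> Rfr r)^^N"
proof -
  have "(\<lambda>a b. (a,b) \<in> Rfr r)\<^sup>*\<^sup>* v w" using vw unfolding rtrancl_def by simp
  then obtain xs where xs: "rtrancl_path (\<lambda>a b. (a,b) \<in> Rfr r) v xs w"
    unfolding rtranclp_eq_rtrancl_path by blast
  from rtrancl_path_distinct[OF xs] obtain ys where ys: "rtrancl_path (\<lambda>a b. (a,b) \<in> Rfr r) v ys w" "distinct (v # ys)"
    by blast
  have ep: "epath E (v # ys)" using rp_epath[OF ys(1)] by (auto simp: Rfr_def)
  have toV: "\<forall>a b. (a,b) \<in> Rfr r \<longrightarrow> b \<in> V" by (auto simp: Rfr_def Ufr_def)
  have vV: "v \<in> V" using v by (simp add: Ufr_def)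
  have st: "set (v # ys) \<subseteq> V" by (rule rp_set[OF ys(1) vV toV])
  have len: "length (v # ys) < N" using sh ep ys(2) st unfolding short_def by blast
  have eqR: "{(a,b). (a,b) \<in> Rfr r} = Rfr r" by auto
  have "(v,w) \<in> (Rfr r)^^(length ys)" using rp_relpow[OF ys(1)] eqR by simp
  then have p1: "(v,w) \<in> (Id_on (Ufr r) \<union> Rfr r)^^(length ys)"
    using relpow_mono_set[of "Rfr r" "Id_on (Ufr r) \<union> Rfr r" "length ys"] by blast
  have "w \<in> Ufr r" using Rfr_rtrancl_U[OF vw v] .
  then have ww: "(w,w) \<in> Id_on (Ufr r) \<union> Rfr r" by blast
  have "(v,w) \<in> (Id_on (Ufr r) \<union> Rfr r)^^(length ys + (N - length ys))"
    by (rule relpow_pad[OF p1 ww])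
  moreover have "length ys + (N - length ys) = N" using len by simp
  ultimately show ?thesis by simp
qed

lemma short_good:
  assumes sh: short and k: "k < N" and I: "Inv k"
  shows "Good k"
proof -
  define r0 where "r0 = k * Suc N"
  define U where "U = Ufr r0"
  define R where "R = Rfr r0"
  define m where "m v = cu (S (r0 + N) v)" for v
  note IA = I[unfolded Inv_def Let_def, folded r0_def, folded R_def]
  have I6: "\<forall>u v. E u v \<longrightarrow> \<not> pl (S r0 u) \<longrightarrow> \<not> pl (S r0 v) \<longrightarrow> lb (S r0 u) = lb (S r0 v)"
    using IA[THEN conjunct2, THEN conjunct2, THEN conjunct2, THEN conjunct2, THEN conjunct2, THEN conjunct1] .
  have I7: "\<forall>v\<in>V. \<not> pl (S r0 v) \<longrightarrow> (case lb (S r0 v) of None \<Rightarrow> k = 0 | Some a \<Rightarrow> \<exists>y. (v,y) \<in> R\<^sup>* \<and> E y a)"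
    using IA[THEN conjunct2, THEN conjunct2, THEN conjunct2, THEN conjunct2, THEN conjunct2, THEN conjunct2, THEN conjunct1] .
  have fl: "(\<forall>w. (v,w) \<in> R\<^sup>* \<longrightarrow> cand (S r0 w) \<le> m v) \<and> (\<exists>w. (v,w) \<in> R\<^sup>* \<and> m v = cand (S r0 w))"
    if v: "v \<in> U" for v
  proof -
    from phase_flood[OF k, of v] v obtain w where w: "(v,w) \<in> (Id_on U \<union> R)^^N" "m v = cand (S r0 w)"
      and up: "\<forall>w. (v,w) \<in> (Id_on U \<union> R)^^N \<longrightarrow> cand (S r0 w) \<le> m v"
      by (auto simp: U_def R_def m_def r0_def)
    have "(v,w) \<in> R\<^sup>*" using relpow_Rfr w(1) by (simp add: R_def U_def)
    moreover have "\<forall>w. (v,w) \<in> R\<^sup>* \<longrightarrow> cand (S r0 w) \<le> m v"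
    proof (intro allI impI)
      fix w' assume "(v,w') \<in> R\<^sup>*"
      then have "(v,w') \<in> (Id_on U \<union> R)^^N" using cover[OF sh, of v w' r0] v unfolding R_def U_def by blast
      then show "cand (S r0 w') \<le> m v" using up by blast
    qed
    ultimately show ?thesis using w by blast
  qed
  have comp_lb: "(v,w) \<in> R\<^sup>* \<Longrightarrow> lb (S r0 v) = lb (S r0 w)" for v w
  proof (induction rule: rtrancl_induct)
    case (step y z) then show ?case using I6 by (auto simp: R_def Rfr_def Ufr_def)
  qed simp
  have candex: "\<exists>y. (v,y) \<in> R\<^sup>* \<and> cand (S r0 y) = Some y" if v: "v \<in> U" for v
  proof (cases "lb (S r0 v)")
    case None
    then show ?thesis using v by (auto simp: cand_def U_def Ufr_def)
  next
    case (Some a)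
    then obtain y where y: "(v,y) \<in> R\<^sup>*" "E y a" using I7 v by (force simp: U_def Ufr_def)
    have "y \<in> U" using Rfr_rtrancl_U[of v y r0] y v by (simp add: R_def U_def)
    moreover have "lb (S r0 y) = Some a" using comp_lb[OF y(1)] Some by simp
    ultimately show ?thesis using y by (auto simp: cand_def U_def Ufr_def)
  qed
  show ?thesis unfolding Good_def Let_def r0_def[symmetric] U_def[symmetric] m_def[symmetric]
  proof (intro ballI conjI allI impI)
    fix v assume v: "v \<in> U"
    obtain y where y: "(v,y) \<in> R\<^sup>*" "cand (S r0 y) = Some y" using candex[OF v] by blast
    then have "cand (S r0 y) \<le> m v" using fl[OF v] by blast
    then have "Some y \<le> m v" using y(2) by simp
    then show "m v \<noteq> None" by (cases "m v") auto
    fix u assume u: "E v u" "u \<in> U"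
    have vu: "(v,u) \<in> R" "(u,v) \<in> R" using u v Ein[OF u(1)] by (auto simp: R_def Rfr_def U_def)
    obtain w1 where w1: "(v,w1) \<in> R\<^sup>*" "m v = cand (S r0 w1)" using fl[OF v] by blast
    obtain w2 where w2: "(u,w2) \<in> R\<^sup>*" "m u = cand (S r0 w2)" using fl[OF u(2)] by blast
    have "(u,w1) \<in> R\<^sup>*" using vu(2) w1(1) by (rule converse_rtrancl_into_rtrancl)
    then have "cand (S r0 w1) \<le> m u" using fl[OF u(2)] by blast
    then have "m v \<le> m u" using w1(2) by simp
    moreover have "(v,w2) \<in> R\<^sup>*" using vu(1) w2(1) by (rule converse_rtrancl_into_rtrancl)
    then have "cand (S r0 w2) \<le> m v" using fl[OF v] by blast
    then have "m u \<le> m v" using w2(2) by simp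
    ultimately show "m u = m v" by simp
  qed
qed

end


context alg
begin

lemma rj_mono_S: "r \<le> r' \<Longrightarrow> rj (S r v) \<Longrightarrow> rj (S r' v)"
proof (induction r' rule: dec_induct)
  case (step r')
  then show ?case using rj_mono by (simp add: S_Suc)
qed simp

lemma InvE:
  assumes "Inv k"
  defines "r \<equiv> k * Suc N"
  shows "\<forall>v\<in>V. pl (S r v) \<longrightarrow> 1 \<le> lv (S r v) \<and> lv (S r v) \<le> k"
    and "\<forall>v\<in>V. Qf r v = None \<longleftrightarrow> Hf k r v = 1"
    and "\<forall>v\<in>V. \<forall>w. Qf r v = Some w \<longrightarrow> w \<in> V \<and> pl (S r w) \<and> Suc (Hf k r w) = Hf k r v"
    and "\<forall>v\<in>V. \<forall>w. pl (S r v) \<longrightarrow> pa (S r v) = Some w \<longrightarrow> E v w"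
    and "\<forall>u v. E u v \<longrightarrow> pl (S r u) \<or> pl (S r v) \<longrightarrow> ancestor V (Qf r) u v \<or> ancestor V (Qf r) v u"
    and "\<forall>u v. E u v \<longrightarrow> \<not> pl (S r u) \<longrightarrow> \<not> pl (S r v) \<longrightarrow> lb (S r u) = lb (S r v)"
    and "\<forall>v\<in>V. \<not> pl (S r v) \<longrightarrow> (case lb (S r v) of None \<Rightarrow> k = 0 | Some a \<Rightarrow> \<exists>y. (v,y) \<in> (Rfr r)\<^sup>* \<and> E y a)"
    and "1 \<le> k \<longrightarrow> (\<exists>!x. x \<in> V \<and> Qf r x = None)"
  using assms(1)[unfolded Inv_def Let_def, folded r_def]
  by - (erule conjE, assumption | (erule conjE)+, assumption)+

lemma chain:
  assumes I: "Inv k"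
  defines "r \<equiv> k * Suc N"
  shows "a \<in> V \<Longrightarrow> pl (S r a) \<Longrightarrow> lv (S r a) = h \<Longrightarrow>
    \<exists>ps. ps \<noteq> [] \<and> hd ps = a \<and> length ps = h \<and> epath E ps \<and> distinct ps \<and> (\<forall>z\<in>set ps. z \<in> V \<and> pl (S r z) \<and> lv (S r z) \<le> h)"
proof (induction h arbitrary: a)
  case 0 then show ?case using InvE(1)[OF I] by (auto simp: r_def)
next
  case (Suc h)
  show ?case
  proof (cases "h = 0")
    case True then show ?thesis using Suc.prems by (intro exI[of _ "[a]"]) (auto simp: epath_def)
  next
    case False
    have H: "Hf k r a = Suc h" using Suc.prems by (simp add: Hf_def)
    then have "Qf r a \<noteq> None" using InvE(2)[OF I] Suc.prems False by (auto simp: r_def)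
    then obtain w where w: "pa (S r a) = Some w" using Suc.prems by (auto simp: Qf_def)
    then have q: "Qf r a = Some w" using Suc.prems by (simp add: Qf_def)
    have w2: "w \<in> V" "pl (S r w)" "Suc (Hf k r w) = Hf k r a" using InvE(3)[OF I] Suc.prems q by (auto simp: r_def)
    have lw: "lv (S r w) = h" using w2 H by (simp add: Hf_def)
    have Eaw: "E a w" using InvE(4)[OF I] Suc.prems w by (auto simp: r_def)
    obtain ps where ps: "ps \<noteq> []" "hd ps = w" "length ps = h" "epath E ps" "distinct ps"
      "\<forall>z\<in>set ps. z \<in> V \<and> pl (S r z) \<and> lv (S r z) \<le> h" using Suc.IH[OF w2(1) w2(2) lw] by blast
    obtain rest where pr: "ps = w # rest" using ps(1,2) by (cases ps) auto
    have "a \<notin> set ps" using ps(6) Suc.prems by auto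
    moreover have "epath E (a # ps)" using ps(4) Eaw pr by (simp add: epath_Cons)
    ultimately show ?thesis using ps Suc.prems by (intro exI[of _ "a # ps"]) auto
  qed
qed

lemma all_placed:
  assumes sh: short and I: "Inv N"
  shows "\<forall>v\<in>V. pl (S (N * Suc N) v)"
proof (rule ccontr)
  define r where "r = N * Suc N"
  assume "\<not> (\<forall>v\<in>V. pl (S (N * Suc N) v))"
  then obtain y where y: "y \<in> V" "\<not> pl (S r y)" by (auto simp: r_def)
  have "case lb (S r y) of None \<Rightarrow> N = 0 | Some a \<Rightarrow> \<exists>y'. (y,y') \<in> (Rfr r)\<^sup>* \<and> E y' a"
    using InvE(7)[OF I, folded r_def] y by blast
  then obtain a y' where a: "lb (S r y) = Some a" "(y,y') \<in> (Rfr r)\<^sup>*" "E y' a"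
    using N2 by (auto split: option.splits)
  have q: "Qf r y = Some a" using a y by (simp add: Qf_def)
  have a2: "a \<in> V" "pl (S r a)" "Suc (Hf N r a) = Hf N r y" using InvE(3)[OF I] y q by (auto simp: r_def)
  have la: "lv (S r a) = N" using a2 y by (simp add: Hf_def)
  obtain ps where ps: "ps \<noteq> []" "hd ps = a" "length ps = N" "epath E ps" "distinct ps"
      "\<forall>z\<in>set ps. z \<in> V \<and> pl (S r z) \<and> lv (S r z) \<le> N" using chain[OF I, of a N] a2 la by (auto simp: r_def)
  have y'U: "y' \<in> Ufr r" using Rfr_rtrancl_U[OF a(2)] y by (simp add: Ufr_def)
  have "y' \<notin> set ps" using ps(6) y'U by (auto simp: Ufr_def)
  moreover obtain rest where pr: "ps = a # rest" using ps(1,2) by (cases ps) auto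
  moreover have "epath E (y' # ps)" using ps(4) a(3) pr by (simp add: epath_Cons)
  ultimately have ep: "epath E (y' # ps)" and dps: "distinct (y' # ps)" using ps(5) by auto
  have sps: "set (y' # ps) \<subseteq> V" using ps(6) y'U by (auto simp: Ufr_def)
  have "length (y' # ps) < N" using sh ep dps sps unfolding short_def by blast
  then show False using ps(3) by simp
qed

end


lemma relpow_in: "(v,w) \<in> (Id_on A \<union> B)^^n \<Longrightarrow> B \<subseteq> A \<times> A \<Longrightarrow> v \<in> A \<Longrightarrow> w \<in> A"
proof (induction n arbitrary: w)
  case (Suc n)
  from relpow_Suc_E[OF Suc.prems(1)] obtain y where "(v,y) \<in> (Id_on A \<union> B)^^n" "(y,w) \<in> Id_on A \<union> B" by blast
  then show ?case using Suc by auto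
qed simp

context alg
begin

lemma late_step: "T0 N < r \<Longrightarrow> pl (S (Suc r) v) = pl (S r v) \<and> lv (S (Suc r) v) = lv (S r v) \<and>
   pa (S (Suc r) v) = pa (S r v) \<and> rj (S (Suc r) v) = rj (S r v) \<and> kd (S (Suc r) v) = kd (S r v)"
proof (cases "r \<le> T0 N + N * (2*N)")
  case True
  assume "T0 N < r"
  then show ?thesis using P5[OF _ True, of v] by (simp add: Let_def)
next
  case False then show ?thesis using P6[of r v] by simp
qed

lemma post: "pl (S (Suc (T0 N) + i) v) = pl (S (T0 N) v) \<and> lv (S (Suc (T0 N) + i) v) = lv (S (T0 N) v) \<and>
   pa (S (Suc (T0 N) + i) v) = pa (S (T0 N) v) \<and> rj (S (Suc (T0 N) + i) v) = (rj (S (T0 N) v) \<or> \<not> pl (S (T0 N) v)) \<and>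
   kd (S (Suc (T0 N) + i) v) = filter (\<lambda>u. (if pl (S (T0 N) u) then pa (S (T0 N) u) else None) = Some v) (nb (S (T0 N) v))"
proof (induction i)
  case 0 then show ?case using P4[of "T0 N" v] by simp
next
  case (Suc i)
  have "T0 N < Suc (T0 N) + i" by simp
  from late_step[OF this, of v] Suc show ?case by simp
qed

lemma dp0: "r \<le> Suc (T0 N) \<Longrightarrow> dp (S r v) = 0"
proof (induction r)
  case 0 then show ?case by (simp add: alg_init_def)
next
  case (Suc r)
  then have IH: "dp (S r v) = 0" by simp
  show ?case
  proof (cases "r < T0 N")
    case True
    consider "pl (S r v)" | "\<not> pl (S r v)" "r mod Suc N < N" | "\<not> pl (S r v)" "r mod Suc N = N"
      by (metis less_Suc_eq mod_less_divisor zero_less_Suc)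
    then show ?thesis
    proof cases
      case 1 then show ?thesis using P1[OF True 1] IH by simp
    next
      case 2 then show ?thesis using P2[OF True 2] IH by simp
    next
      case 3 then show ?thesis using P3[OF True 3] IH by (simp add: Let_def)
    qed
  next
    case False
    then have "r = T0 N" using Suc.prems by simp
    then show ?thesis using P4[of r v] IH by simp
  qed
qed

lemma idle: "T0 N + N * (2*N) < r \<Longrightarrow> S (r + i) v = (S r v)\<lparr>tm := r + i\<rparr>"
proof (induction i)
  case 0 then show ?case by simp
next
  case (Suc i)
  have "S (Suc (r + i)) v = (S (r + i) v)\<lparr>tm := Suc (r + i)\<rparr>" using P6[of "r + i" v] Suc.prems by simp
  then show ?case using Suc by simp
qed

definition lvZ where "lvZ v = lv (S (T0 N) v)"
definition DD where "DD = Max (lvZ ` V)"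

lemma thr:
  assumes q: "q < N" and v: "v \<in> V"
    and diam: "\<forall>v\<in>V. \<forall>w\<in>V. (v,w) \<in> (Id_on V \<union> {(a,b). E a b})^^(2*N - 1)"
  shows "dp (S (Suc (T0 N) + Suc q * (2*N)) v) = (if Suc q \<le> DD then Suc q else dp (S (Suc (T0 N) + q * (2*N)) v))"
proof -
  define tq where "tq = Suc (T0 N) + q * (2*N)"
  define x where "x j v = effB N (S (tq + j) v)" for j v
  define Rl where "Rl = {(a,b). E a b}"
  define c where "c w = (Suc q \<le> lvZ w)" for w
  define L where "L = 2*N - 1"
  have L2: "Suc L = 2*N" using N2 by (simp add: L_def)
  have rng: "T0 N < tq + j \<and> tq + j \<le> T0 N + N * (2*N)" if "j < 2*N" for j
  proof -
    have "Suc q * (2*N) \<le> N * (2*N)" using q by (intro mult_le_mono1) simp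
    then show ?thesis using that by (simp add: tq_def)
  qed
  have idx: "tq + j - Suc (T0 N) = q * (2*N) + j" for j by (simp add: tq_def)
  have md: "(q * (2*N) + j) mod (2*N) = j" "(q * (2*N) + j) div (2*N) = q" if "j < 2*N" for j
    using that by simp_all
  have lvc: "lv (S (tq + j) w) = lvZ w" for j w
    using post[of "q * (2*N) + j" w] by (simp add: tq_def lvZ_def add.assoc)
  have x0: "x 0 w = c w" for w
    using md[of 0] N2 idx[of 0] lvc[of 0 w] by (simp add: x_def effB_def c_def)
  define b where "b j v = (x j v \<or> (\<exists>u. E v u \<and> x j u))" for j v
  have stp: "S (Suc (tq + j)) w = (if Suc j = 2*N then (S (tq + j) w)\<lparr>tm := Suc (tq + j), bt := b j w, dp := (if b j w then Suc q else dp (S (tq + j) w))\<rparr>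
      else (S (tq + j) w)\<lparr>tm := Suc (tq + j), bt := b j w\<rparr>)" if "j < 2*N" for j w
    using P5[of "tq + j" w, unfolded Let_def idx md[OF that]] rng[OF that] by (simp add: b_def x_def)
  have xs: "x (Suc j) w = b j w" if "Suc j < 2*N" for j w
  proof -
    have "x (Suc j) w = bt (S (Suc (tq + j)) w)"
      using idx[of "Suc j"] md[OF that] that by (simp add: x_def effB_def)
    then show ?thesis using stp[of j w] that by simp
  qed
  have fg: "(\<forall>w. (v,w) \<in> (Id_on V \<union> Rl)^^L \<longrightarrow> c w \<le> x L v) \<and> (\<exists>w. (v,w) \<in> (Id_on V \<union> Rl)^^L \<and> x L v = c w)"
  proof (rule flood_gen[of V x c L Rl, OF _ _ _ _ _ _ v])
    show "\<forall>v\<in>V. x 0 v = c v" using x0 by simp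
    show "\<forall>j<L. \<forall>v\<in>V. x j v \<le> x (Suc j) v" using xs L2 by (auto simp: b_def)
    show "\<forall>j<L. \<forall>v\<in>V. \<forall>u. (v,u) \<in> Rl \<longrightarrow> x j u \<le> x (Suc j) v" using xs L2 by (auto simp: b_def Rl_def)
    show "\<forall>j<L. \<forall>v\<in>V. x (Suc j) v = x j v \<or> (\<exists>u. (v,u) \<in> Rl \<and> x (Suc j) v = x j u)"
      using xs L2 by (auto simp: b_def Rl_def)
    show "Rl \<subseteq> V \<times> V" using Ein by (auto simp: Rl_def)
  qed simp
  have glob: "x L w = (\<exists>w'\<in>V. c w')" if w: "w \<in> V" for w
  proof -
    have fgw: "(\<forall>w'. (w,w') \<in> (Id_on V \<union> Rl)^^L \<longrightarrow> c w' \<le> x L w) \<and> (\<exists>w'. (w,w') \<in> (Id_on V \<union> Rl)^^L \<and> x L w = c w')"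
    proof (rule flood_gen[of V x c L Rl, OF _ _ _ _ _ _ w])
      show "\<forall>v\<in>V. x 0 v = c v" using x0 by simp
      show "\<forall>j<L. \<forall>v\<in>V. x j v \<le> x (Suc j) v" using xs L2 by (auto simp: b_def)
      show "\<forall>j<L. \<forall>v\<in>V. \<forall>u. (v,u) \<in> Rl \<longrightarrow> x j u \<le> x (Suc j) v" using xs L2 by (auto simp: b_def Rl_def)
      show "\<forall>j<L. \<forall>v\<in>V. x (Suc j) v = x j v \<or> (\<exists>u. (v,u) \<in> Rl \<and> x (Suc j) v = x j u)"
        using xs L2 by (auto simp: b_def Rl_def)
      show "Rl \<subseteq> V \<times> V" using Ein by (auto simp: Rl_def)
    qed simp
    have RlV: "Rl \<subseteq> V \<times> V" using Ein by (auto simp: Rl_def)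
    show ?thesis
    proof
      assume "x L w"
      then obtain w' where "(w,w') \<in> (Id_on V \<union> Rl)^^L" "c w'" using fgw by auto
      moreover then have "w' \<in> V" using relpow_in RlV w by metis
      ultimately show "\<exists>w'\<in>V. c w'" by blast
    next
      assume "\<exists>w'\<in>V. c w'"
      then obtain w' where "w' \<in> V" "c w'" by blast
      moreover then have "(w,w') \<in> (Id_on V \<union> Rl)^^L" using diam w by (simp add: Rl_def L_def)
      ultimately show "x L w" using fgw by auto
    qed
  qed
  have "(\<exists>w'\<in>V. c w') = (Suc q \<le> DD)"
    unfolding c_def DD_def using finV neV by (subst Max_ge_iff) auto
  then have bL: "b L v = (Suc q \<le> DD)" using glob v Ein by (auto simp: b_def)
  have dpc: "dp (S (tq + j) v) = dp (S tq v)" if "j \<le> L" for j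
    using that
  proof (induction j)
    case (Suc j)
    then have "j < 2*N" "Suc j \<noteq> 2*N" using L2 by simp_all
    then show ?case using stp[of j v] Suc by simp
  qed simp
  have "S (Suc (T0 N) + Suc q * (2*N)) v = S (Suc (tq + L)) v"
    by (rule arg_cong[where f="\<lambda>r. S r v"]) (use L2 in \<open>simp add: tq_def\<close>)
  also have "dp \<dots> = (if b L v then Suc q else dp (S (tq + L) v))" using stp[of L v] L2 by simp
  finally show ?thesis using bL dpc[of L] by (simp add: tq_def)
qed

end


context alg
begin

definition pZ where "pZ v = pa (S (T0 N) v)"

lemma Z_eq: "T0 N = N * Suc N" by (simp add: T0_def)

context
  assumes IN: "Inv N" and AP: "\<forall>v\<in>V. pl (S (T0 N) v)"
begin

lemma QfZ: "v \<in> V \<Longrightarrow> Qf (T0 N) v = pZ v" using AP by (simp add: Qf_def pZ_def)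
lemma HfZ: "v \<in> V \<Longrightarrow> Hf N (T0 N) v = lvZ v" using AP by (simp add: Hf_def lvZ_def)

lemma F1: "v \<in> V \<Longrightarrow> 1 \<le> lvZ v \<and> lvZ v \<le> N"
  using InvE(1)[OF IN, folded Z_eq] AP by (simp add: lvZ_def)
lemma F2: "v \<in> V \<Longrightarrow> pZ v = None \<longleftrightarrow> lvZ v = 1"
  using InvE(2)[OF IN, folded Z_eq] QfZ HfZ by simp
lemma F3: "v \<in> V \<Longrightarrow> pZ v = Some w \<Longrightarrow> w \<in> V \<and> Suc (lvZ w) = lvZ v"
  using InvE(3)[OF IN, folded Z_eq] QfZ HfZ by metis
lemma F4: "v \<in> V \<Longrightarrow> pZ v = Some w \<Longrightarrow> E v w"
  using InvE(4)[OF IN, folded Z_eq] AP by (simp add: pZ_def)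

lemma PR_eq: "parent_rel V (Qf (T0 N)) = parent_rel V pZ"
  using QfZ by (auto simp: parent_rel_def)

lemma F5: "E u v \<Longrightarrow> ancestor V pZ u v \<or> ancestor V pZ v u"
proof -
  assume uv: "E u v"
  then have "pl (S (T0 N) u)" using AP Ein by blast
  then show ?thesis using InvE(5)[OF IN, folded Z_eq] uv unfolding ancestor_def PR_eq by blast
qed

lemma F8: "\<exists>!x. x \<in> V \<and> pZ x = None"
proof -
  have "\<exists>!x. x \<in> V \<and> Qf (T0 N) x = None" using InvE(8)[OF IN, folded Z_eq] N2 by simp
  moreover have "x \<in> V \<and> Qf (T0 N) x = None \<longleftrightarrow> x \<in> V \<and> pZ x = None" for x using QfZ by auto
  ultimately show ?thesis by simp
qed

definition rt where "rt = (THE x. x \<in> V \<and> pZ x = None)"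
lemma rt: "rt \<in> V" "pZ rt = None" "x \<in> V \<Longrightarrow> pZ x = None \<Longrightarrow> x = rt"
  using theI'[OF F8] F8 unfolding rt_def by blast+

lemma to_root: "v \<in> V \<Longrightarrow> lvZ v = Suc h \<Longrightarrow> (v, rt) \<in> (parent_rel V pZ)^^h"
proof (induction h arbitrary: v)
  case 0
  then have "pZ v = None" using F2 by simp
  then show ?case using rt 0 by simp
next
  case (Suc h)
  then have "pZ v \<noteq> None" using F2 by simp
  then obtain w where w: "pZ v = Some w" by blast
  then have w2: "w \<in> V" "lvZ w = Suc h" using F3[OF Suc.prems(1) w] Suc.prems by auto
  have "(v,w) \<in> parent_rel V pZ" using w Suc.prems by (simp add: parent_rel_def)
  then show ?case using Suc.IH[OF w2] by (rule relpow_Suc_I2)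
qed

lemma desc_le: "(u,w) \<in> (parent_rel V pZ)\<^sup>* \<Longrightarrow> u \<in> V \<Longrightarrow> w \<in> V \<and> lvZ w \<le> lvZ u"
proof (induction rule: rtrancl_induct)
  case (step y z)
  then have "y \<in> V" "pZ y = Some z" by (auto simp: parent_rel_def)
  then show ?case using F3 step by fastforce
qed simp

lemma card_anc: "v \<in> V \<Longrightarrow> lvZ v = h \<Longrightarrow> card {w. (v,w) \<in> (parent_rel V pZ)\<^sup>*} = h"
proof (induction h arbitrary: v rule: less_induct)
  case (less h)
  let ?PR = "parent_rel V pZ"
  have split: "{w. (v,w) \<in> ?PR\<^sup>*} = insert v {w. \<exists>u. (v,u) \<in> ?PR \<and> (u,w) \<in> ?PR\<^sup>*}"
    by (auto elim: converse_rtranclE intro: converse_rtrancl_into_rtrancl)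
  show ?case
  proof (cases "pZ v")
    case None
    then have "{w. \<exists>u. (v,u) \<in> ?PR \<and> (u,w) \<in> ?PR\<^sup>*} = {}" by (auto simp: parent_rel_def)
    then have "{w. (v,w) \<in> ?PR\<^sup>*} = {v}" unfolding split by (simp only:)
    then show ?thesis using F2 less.prems None by simp
  next
    case (Some u)
    have u: "u \<in> V" "Suc (lvZ u) = lvZ v" using F3[OF less.prems(1) Some] by auto
    have eq: "{w. \<exists>u'. (v,u') \<in> ?PR \<and> (u',w) \<in> ?PR\<^sup>*} = {w. (u,w) \<in> ?PR\<^sup>*}"
      using Some less.prems by (auto simp: parent_rel_def)
    have fin: "finite {w. (u,w) \<in> ?PR\<^sup>*}"
      using desc_le[OF _ u(1)] finV by (metis (no_types, lifting) mem_Collect_eq rev_finite_subset subsetI)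
    have nv: "v \<notin> {w. (u,w) \<in> ?PR\<^sup>*}" using desc_le[OF _ u(1)] u by fastforce
    have "card {w. (u,w) \<in> ?PR\<^sup>*} = lvZ u" using less.IH[of "lvZ u" u] u less.prems by simp
    then show ?thesis using split eq fin nv u less.prems by simp
  qed
qed

lemma elim_tree: "elimination_tree V E pZ"
  unfolding elimination_tree_def elimination_forest_def rooted_forest_def
proof (intro conjI ballI allI impI)
  fix v w assume "v \<in> V" "pZ v = Some w" then show "w \<in> V" using F3 by blast
next
  fix v assume v: "v \<in> V"
  obtain h where "lvZ v = Suc h" using F1[OF v] by (metis Suc_pred' less_eq_Suc_le One_nat_def)
  then have "(v, rt) \<in> (parent_rel V pZ)^^h" using to_root v by blast
  then have "(v, rt) \<in> (parent_rel V pZ)\<^sup>*" using relpow_imp_rtrancl by blast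
  then show "\<exists>r\<in>V. pZ r = None \<and> (v, r) \<in> (parent_rel V pZ)\<^sup>*" using rt by blast
next
  fix u v assume "E u v" then show "ancestor V pZ u v \<or> ancestor V pZ v u" by (rule F5)
next
  show "\<exists>!r. r \<in> V \<and> pZ r = None" using F8 .
qed

lemma fdepth: "forest_depth V pZ = DD"
  unfolding forest_depth_def DD_def using card_anc by (intro arg_cong[where f=Max] image_cong) auto

lemma DD_bounds: "1 \<le> DD \<and> DD \<le> N"
proof -
  have fin: "finite (lvZ ` V)" "lvZ ` V \<noteq> {}" using finV neV by auto
  obtain v where v: "v \<in> V" using neV by blast
  have "1 \<le> DD" unfolding DD_def using F1[OF v] fin v by (meson Max_ge image_eqI order_trans)
  moreover have "DD \<le> N" unfolding DD_def using F1 fin by (subst Max_le_iff) auto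
  ultimately show ?thesis by simp
qed

lemma diam: "\<forall>v\<in>V. \<forall>w\<in>V. (v,w) \<in> (Id_on V \<union> {(a,b). E a b})^^(2*N - 1)"
proof (intro ballI)
  fix v w assume v: "v \<in> V" and w: "w \<in> V"
  define X where "X = Id_on V \<union> {(a,b). E a b}"
  have sub: "parent_rel V pZ \<subseteq> X" using F4 by (auto simp: parent_rel_def X_def)
  obtain a where a: "lvZ v = Suc a" using F1[OF v] by (metis Suc_pred' less_eq_Suc_le One_nat_def)
  obtain b where b: "lvZ w = Suc b" using F1[OF w] by (metis Suc_pred' less_eq_Suc_le One_nat_def)
  have va: "(v, rt) \<in> X^^a" using to_root[OF v a] relpow_mono_set[OF sub] by blast
  have wb: "(w, rt) \<in> X^^b" using to_root[OF w b] relpow_mono_set[OF sub] by blast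
  have symX: "\<forall>x y. (x,y) \<in> X \<longrightarrow> (y,x) \<in> X" using Ein by (auto simp: X_def)
  have "(rt, w) \<in> X^^b" using relpow_sym[OF symX wb] .
  then have "(v, w) \<in> X^^(a + b)" using va by (auto simp: relpow_add)
  moreover have "(w,w) \<in> X" using w unfolding X_def by blast
  ultimately have p: "(v, w) \<in> X^^(a + b + (2*N - 1 - (a + b)))" by (rule relpow_pad)
  have "a + b \<le> 2*N - 1" using F1[OF v] F1[OF w] a b by simp
  then have eq: "a + b + (2*N - 1 - (a + b)) = 2*N - 1" by simp
  show "(v,w) \<in> (Id_on V \<union> {(a,b). E a b})^^(2*N - 1)" using p unfolding eq X_def .
qed

lemma dp_final: "q \<le> N \<Longrightarrow> v \<in> V \<Longrightarrow> dp (S (Suc (T0 N) + q * (2*N)) v) = min q DD"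
proof (induction q)
  case 0 then show ?case using dp0 by simp
next
  case (Suc q)
  then have "dp (S (Suc (T0 N) + Suc q * (2*N)) v) = (if Suc q \<le> DD then Suc q else min q DD)"
    using thr[of q v] diam by simp
  then show ?case by simp
qed

lemma final_out:
  assumes R: "Suc (T0 N) + N * (2*N) \<le> R" and nr: "\<forall>v\<in>V. \<not> rj (S R v)"
  shows "\<exists>par. elimination_tree V E par \<and> forest_depth V par \<le> N \<and>
    (\<forall>v\<in>V. alg_out (S R v) = TreeInfo (par v) {u\<in>V. par u = Some v} (forest_depth V par))"
proof (intro exI conjI ballI)
  show "elimination_tree V E pZ" by (rule elim_tree)
  show "forest_depth V pZ \<le> N" using fdepth DD_bounds by simp
  fix v assume v: "v \<in> V"
  define tN where "tN = Suc (T0 N) + N * (2*N)"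
  have SR: "S R v = (S tN v)\<lparr>tm := R\<rparr>"
  proof (cases "R = tN")
    case True then show ?thesis by simp
  next
    case False
    then have "T0 N + N * (2*N) < tN" "R = tN + (R - tN)" using R by (simp_all add: tN_def)
    from idle[OF this(1), of "R - tN" v] this(2) show ?thesis by simp
  qed
  have pst: "pa (S tN v) = pZ v" "kd (S tN v) = filter (\<lambda>u. (if pl (S (T0 N) u) then pa (S (T0 N) u) else None) = Some v) (nb (S (T0 N) v))"
    using post[of "N * (2*N)" v] by (simp_all add: tN_def pZ_def)
  have dpv: "dp (S tN v) = DD" using dp_final[of N v] v DD_bounds by (simp add: tN_def)
  have "set (kd (S tN v)) = {u. E v u \<and> pZ u = Some v}"
    using pst(2) AP Ein by (auto simp: pZ_def)
  also have "\<dots> = {u\<in>V. pZ u = Some v}" using F4 Ein by blast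
  finally have kds: "set (kd (S tN v)) = {u\<in>V. pZ u = Some v}" .
  have "\<not> rj (S R v)" using nr v by blast
  then show "alg_out (S R v) = TreeInfo (pZ v) {u\<in>V. pZ u = Some v} (forest_depth V pZ)"
    using SR pst kds dpv fdepth by (simp add: alg_out_def)
qed

end

lemma NR_case:
  assumes R: "Suc (T0 N) + N * (2*N) \<le> R" and nr: "\<forall>v\<in>V. \<not> rj (S R v)"
  shows "\<exists>par. elimination_tree V E par \<and> forest_depth V par \<le> N \<and>
    (\<forall>v\<in>V. alg_out (S R v) = TreeInfo (par v) {u\<in>V. par u = Some v} (forest_depth V par))"
proof -
  have nrr: "\<not> rj (S r v)" if "r \<le> R" "v \<in> V" for r v using rj_mono_S[OF that(1)] nr that(2) by blast
  have "Good k" if "k < N" for k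
  proof (rule NR_good[OF that])
    have "Suc k * Suc N \<le> N * Suc N" using that by (intro mult_le_mono1) simp
    then have "Suc k * Suc N \<le> R" using R by (simp add: T0_def)
    then show "\<forall>v\<in>V. \<not> rj (S (Suc k * Suc N) v)" using nrr by blast
  qed
  then have IN: "Inv N" using inv_all by blast
  have AP: "\<forall>v\<in>V. pl (S (T0 N) v)"
  proof
    fix v assume v: "v \<in> V"
    have "\<not> rj (S (Suc (T0 N) + 0) v)" using nrr[of "Suc (T0 N) + 0" v] R v by simp
    then show "pl (S (T0 N) v)" using post[of 0 v] by simp
  qed
  show ?thesis using final_out[OF IN AP R nr] .
qed

lemma short_case:
  assumes sh: short and R: "Suc (T0 N) + N * (2*N) \<le> R"
  shows "\<forall>v\<in>V. \<not> rj (S R v)"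
proof
  fix v assume v: "v \<in> V"
  have allG: "\<forall>k<N. Inv k \<longrightarrow> Good k" using short_good[OF sh] by blast
  have IN: "Inv N" using inv_all[OF allG] by simp
  have rk: "k \<le> N \<Longrightarrow> \<not> rj (S (k * Suc N) v)" for k
  proof (induction k)
    case 0 then show ?case by (simp add: alg_init_def)
  next
    case (Suc k)
    then have "Good k" using allG inv_all[OF allG] by simp
    then show ?case using good_norj[of k v] Suc v by simp
  qed
  have AP: "\<forall>v\<in>V. pl (S (T0 N) v)" using all_placed[OF sh IN] by (simp add: T0_def)
  have "\<not> rj (S (T0 N) v)" using rk[of N] by (simp add: T0_def)
  then have "\<not> rj (S (Suc (T0 N) + (R - Suc (T0 N))) v)" using post[of "R - Suc (T0 N)" v] AP v by simp
  moreover have "Suc (T0 N) + (R - Suc (T0 N)) = R" using R by simp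
  ultimately show "\<not> rj (S R v)" by simp
qed

end


lemma inst:
  fixes d :: nat and V :: "nat set" and E :: "nat \<Rightarrow> nat \<Rightarrow> bool"
  assumes d: "1 \<le> d" and H: "connected_graph V E \<and> V \<subseteq> {..< (max 2 (card V)) ^ c}"
  shows "let R = 5 * 2 ^ (2 * d);
             st = run (\<lambda>v S. enc (alg_init v S)) (\<lambda>s u. alg_send (2^d) (dec s) u) (\<lambda>s m. enc (alg_step (2^d) (dec s) m)) E;
             res = (\<lambda>v. alg_out (dec (st R v)))
         in
         (\<forall>r < R. \<forall>u v. E u v \<longrightarrow>
             length (alg_send (2^d) (dec (st r u)) v) \<le> (c+1) * log_bits (card V)) \<and>
         ((\<exists>par. elimination_tree V E par \<and> forest_depth V par \<le> 2 ^ d \<and>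
             (\<forall>v\<in>V. res v = TreeInfo (par v) {u\<in>V. par u = Some v}
                                        (forest_depth V par)))
          \<or> ((\<exists>v\<in>V. res v = Reject) \<and> treedepth V E > d))"
proof -
    define N where "N = (2::nat) ^ d"
    have N2: "2 \<le> N" unfolding N_def using d
      by (metis One_nat_def le_add1 le_add_diff_inverse power_increasing power_one_right zero_less_numeral nat_le_linear numeral_le_one_iff semiring_norm(69) one_le_numeral)
    have R: "5 * 2 ^ (2 * d) = 5 * N * N" unfolding N_def by (simp add: mult_2 power_add)
    interpret alg V E N using H N2 by unfold_locales auto
    have st: "run (\<lambda>v S. enc (alg_init v S)) (\<lambda>s u. alg_send N (dec s) u) (\<lambda>s m. enc (alg_step N (dec s) m)) E r v
       = enc (S r v)" for r v by (rule run_enc)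
    define RR where "RR = 5 * N * N"
    have RRb: "Suc (T0 N) + N * (2*N) \<le> RR"
    proof -
      have "N + 1 \<le> 2 * N * N" using N2 by (metis add_le_mono le_add1 mult_2 mult_le_mono1 one_le_mult_iff order_trans nat_le_linear numeral_le_one_iff semiring_norm(69) le_square)
      then show ?thesis by (simp add: RR_def T0_def algebra_simps)
    qed
    have bw: "\<forall>r < RR. \<forall>u v. E u v \<longrightarrow> length (alg_send N (S r u) v) \<le> (c+1) * log_bits (card V)"
      using bandwidth H by blast
    have main: "(\<exists>par. elimination_tree V E par \<and> forest_depth V par \<le> 2 ^ d \<and>
           (\<forall>v\<in>V. alg_out (S RR v) = TreeInfo (par v) {u\<in>V. par u = Some v} (forest_depth V par)))
        \<or> ((\<exists>v\<in>V. alg_out (S RR v) = Reject) \<and> treedepth V E > d)"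
    proof (cases "\<forall>v\<in>V. \<not> rj (S RR v)")
      case True
      then show ?thesis using NR_case[OF RRb True] by (simp add: N_def)
    next
      case False
      then obtain v where v: "v \<in> V" "rj (S RR v)" by blast
      then have rej: "alg_out (S RR v) = Reject" by (simp add: alg_out_def)
      have "treedepth V E > d"
      proof (rule ccontr)
        assume "\<not> d < treedepth V E"
        then have "treedepth V E \<le> d" by simp
        moreover have "\<forall>u v. E u v \<longrightarrow> u \<in> V \<and> v \<in> V \<and> u \<noteq> v" using Ein by blast
        ultimately obtain par where par: "elimination_forest V E par" "forest_depth V par \<le> d"
          using td_small[OF finV neV] by blast
        have "\<forall>ps. epath E ps \<longrightarrow> distinct ps \<longrightarrow> set ps \<subseteq> V \<longrightarrow> length ps < N"
          unfolding N_def using path_bound[OF par(1) finV _ _ _ par(2)] by blast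
        then have "short" by (simp add: short_def)
        then show False using short_case RRb v by blast
      qed
      then show ?thesis using rej v by blast
    qed
    show ?thesis
      unfolding Let_def st dec_enc R RR_def[symmetric] N_def[symmetric] using bw main[folded N_def] by blast
qed

theorem mainTheorem5:
  "\<forall>c::nat. \<exists>B K::nat. \<forall>d::nat. d \<ge> 1 \<longrightarrow>
     (\<exists>(init :: nat \<Rightarrow> nat set \<Rightarrow> nat list)
        (send :: nat list \<Rightarrow> nat \<Rightarrow> bool list)
        (step :: nat list \<Rightarrow> (nat \<Rightarrow> bool list) \<Rightarrow> nat list)
        (out :: nat list \<Rightarrow> td_output).
      \<forall>(V :: nat set) (E :: nat \<Rightarrow> nat \<Rightarrow> bool).
        connected_graph V E \<and> V \<subseteq> {..< (max 2 (card V)) ^ c} \<longrightarrow>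
        (let R = K * 2 ^ (2 * d);
             st = run init send step E;
             res = (\<lambda>v. out (st R v))
         in
         (\<forall>r < R. \<forall>u v. E u v \<longrightarrow>
             length (send (st r u) v) \<le> B * log_bits (card V)) \<and>
         ((\<exists>par. elimination_tree V E par \<and> forest_depth V par \<le> 2 ^ d \<and>
             (\<forall>v\<in>V. res v = TreeInfo (par v) {u\<in>V. par u = Some v}
                                        (forest_depth V par)))
          \<or> ((\<exists>v\<in>V. res v = Reject) \<and> treedepth V E > d))))"
  apply (rule allI)
  subgoal for c
    apply (rule exI[of _ "c+1"])
    apply (rule exI[of _ "5::nat"])
    apply (intro allI impI)
    subgoal for d
      apply (rule exI[of _ "\<lambda>v S. enc (alg_init v S)"])
      apply (rule exI[of _ "\<lambda>s u. alg_send (2^d) (dec s) u"])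
      apply (rule exI[of _ "\<lambda>s m. enc (alg_step (2^d) (dec s) m)"])
      apply (rule exI[of _ "\<lambda>s. alg_out (dec s)"])
      apply (intro allI impI)
      subgoal for V E
        using inst[of d V E c] by simp
      done
    done
  done

end
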